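(* Let $R\ge0$, let $X$ be an $R$-rough geodesic metric space, let $\alpha\colon S\to X$ be an $R$-circle, and consider a tightening sequence for $\alpha$ (with Riemannian circles $S_i$, $R$-circles $\alpha_i\colon S_i\to X$, tightened segments $Q_i$ and maps $\pi^{(i)}\colon S\to S_i$). Suppose the tightening sequence is completely disjoint and $\sum_{i=0}^\infty|Q_i|<|S|$. Let $S_\infty$ be the metric quotient of $(S,\delta)$, where $\delta(x,y)=\lim_i d_{S_i}(\pi^{(i)}(x),\pi^{(i)}(y))$, and let $\sigma\colon S_\infty\to S$ be a section of the quotient map $S\to S_\infty$. Then for every $x\in S_\infty$ the limit $\alpha_\infty(x)=\lim_{i\to\infty}\alpha_i(\pi^{(i)}(\sigma(x)))$ exists, and $\alpha_\infty\colon S_\infty\to X$ is an $R$-circle.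
   Context: $X$ is $R$-rough geodesic if any $x_1,x_2$ are joined by $f\colon[0,\ell]\to X$, $\ell=d(x_1,x_2)$, $f(0)=x_1,f(\ell)=x_2$, with $|d(f(s),f(t))-|s-t||\le R$. An $R$-circle is a map $\beta\colon T\to X$ from a Riemannian circle $T$ (length $|T|$) with $d(\beta(p),\beta(q))\le d_T(p,q)+R$. Tightening sequence for a Riemannian circle $S$: Riemannian circles $S_0=S,S_1,\dots$, spaces $P_i$ (compact intervals or Riemannian circles), maps $\iota_i\colon P_i\hookrightarrow S_i$, $\varphi_i\colon P_i\to S_{i+1}$ with, for each $i$, either (a) $\iota_i,\varphi_i$ continuous unit-speed paths, $\varphi_i$ injective on the interior $\mathring P_i$, $|P_i|\ge|S|/2$, $|S_{i+1}|<|S_i|$; or (b) $P_i=S_i=S_{i+1}$, $\iota_i,\varphi_i$ identities. In case (a) $Q_i=S_i\setminus\iota_i(\mathring P_i)$, $\bar Q_i=S_{i+1}\setminus\varphi_i(\mathring P_i)$ (closed segments, $|\bar Q_i|<|Q_i|$); in case (b) $Q_i=\bar Q_i=\emptyset$. $\pi_i\colon S_i\to S_{i+1}$ equals $\varphi_i\circ\iota_i^{-1}$ on $\iota_i(P_i)$ and is affine from $Q_i$ onto $\bar Q_i$; $\pi^{(i)}=\pi_{i-1}\circ\cdots\circ\pi_0$. With $\mathring P_{0,0}=S$, $\mathring P_{0,j+1}=\mathring P_{0,j}\cap\iota_j(\mathring P_j)$ (in $S_j$), the sequence is completely disjoint if $Q_i\subset\mathring P_{0,i}$ in $S_i$ for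 all $i$. A tightening sequence for the $R$-circle $\alpha$ is a tightening sequence for $S$ with $R$-circles $\alpha_i\colon S_i\to X$, $\alpha_0=\alpha$, and $\alpha_i\circ\iota_i=\alpha_{i+1}\circ\varphi_i$ for all $i$. *)

theory Defs
  imports "HOL-Analysis.Analysis"
begin

text \<open>A Riemannian circle of length L > 0 is modelled by the point set {0..<L}
  (reals modulo L) with the intrinsic (arc length) metric circ_dist L.\<close>
definition circ_dist :: "real \<Rightarrow> real \<Rightarrow> real \<Rightarrow> real" where
  "circ_dist L x y = L * min (frac (\<bar>x - y\<bar> / L)) (1 - frac (\<bar>x - y\<bar> / L))"

definition circ_pts :: "real \<Rightarrow> real set" where
  "circ_pts L = {0..<L}"

definition rough_geodesic :: "real \<Rightarrow> 'a::metric_space set \<Rightarrow> bool" where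
  "rough_geodesic R X \<longleftrightarrow>
     (\<forall>x1\<in>X. \<forall>x2\<in>X. \<exists>f::real \<Rightarrow> 'a.
        (\<forall>s\<in>{0..dist x1 x2}. f s \<in> X) \<and> f 0 = x1 \<and> f (dist x1 x2) = x2 \<and>
        (\<forall>s\<in>{0..dist x1 x2}. \<forall>t\<in>{0..dist x1 x2}.
            \<bar>dist (f s) (f t) - \<bar>s - t\<bar>\<bar> \<le> R))"

definition rcircle :: "real \<Rightarrow> real \<Rightarrow> (real \<Rightarrow> 'a::metric_space) \<Rightarrow> bool" where
  "rcircle R L \<beta> \<longleftrightarrow> 0 < L \<and>
     (\<forall>p\<in>circ_pts L. \<forall>q\<in>circ_pts L. dist (\<beta> p) (\<beta> q) \<le> circ_dist L p q + R)"

text \<open>The spaces P_i: a compact interval [0,l] (c = False) or a Riemannian circle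
  of length l (c = True); their point sets, interiors and metrics.\<close>
definition pdom :: "bool \<Rightarrow> real \<Rightarrow> real set" where
  "pdom c l = (if c then {0..<l} else {0..l})"

definition pint :: "bool \<Rightarrow> real \<Rightarrow> real set" where
  "pint c l = (if c then {0..<l} else {0<..<l})"

definition pdist :: "bool \<Rightarrow> real \<Rightarrow> real \<Rightarrow> real \<Rightarrow> real" where
  "pdist c l s t = (if c then circ_dist l s t else \<bar>s - t\<bar>)"

definition unit_speed_path :: "bool \<Rightarrow> real \<Rightarrow> real \<Rightarrow> (real \<Rightarrow> real) \<Rightarrow> bool" where
  "unit_speed_path c l L f \<longleftrightarrow> f ` pdom c l \<subseteq> circ_pts L \<and>
     (\<forall>t\<in>pdom c l. \<exists>e>0. \<forall>s\<in>pdom c l. pdist c l s t < e \<longrightarrow>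
         circ_dist L (f s) (f t) = pdist c l s t)"

text \<open>Q_i and \<bar>Q_i (empty in case (b)).\<close>
definition Qset :: "bool \<Rightarrow> real \<Rightarrow> bool \<Rightarrow> real \<Rightarrow> (real \<Rightarrow> real) \<Rightarrow> real set" where
  "Qset a L c l f = (if a then circ_pts L - f ` pint c l else {})"

fun picomp :: "(nat \<Rightarrow> real \<Rightarrow> real) \<Rightarrow> nat \<Rightarrow> real \<Rightarrow> real" where
  "picomp \<pi> 0 = (\<lambda>x. x)"
| "picomp \<pi> (Suc i) = (\<lambda>x. \<pi> i (picomp \<pi> i x))"

text \<open>The sets \<open>P_{0,j}\<close> (interiors), regarded as subsets of S_j.\<close>
fun P0 :: "(nat \<Rightarrow> real) \<Rightarrow> (nat \<Rightarrow> bool) \<Rightarrow> (nat \<Rightarrow> real) \<Rightarrow> (nat \<Rightarrow> real \<Rightarrow> real)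
             \<Rightarrow> (nat \<Rightarrow> real \<Rightarrow> real) \<Rightarrow> nat \<Rightarrow> real set" where
  "P0 L pc l \<iota> \<pi> 0 = circ_pts (L 0)"
| "P0 L pc l \<iota> \<pi> (Suc j) = \<pi> j ` (P0 L pc l \<iota> \<pi> j \<inter> \<iota> j ` pint (pc j) (l j))"

text \<open>Tightening sequence for the Riemannian circle S = S_0 of length L 0.
  caseA i: step i is of type (a) (otherwise type (b)).
  pc i, l i: P_i is a circle (pc i) or interval, of length l i.
  \<iota>, \<phi>: the maps; \<pi> i: the map pi_i : S_i \<rightarrow> S_{i+1}.\<close>
definition tightening_seq ::
  "(nat \<Rightarrow> real) \<Rightarrow> (nat \<Rightarrow> bool) \<Rightarrow> (nat \<Rightarrow> bool) \<Rightarrow> (nat \<Rightarrow> real) \<Rightarrow>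
   (nat \<Rightarrow> real \<Rightarrow> real) \<Rightarrow> (nat \<Rightarrow> real \<Rightarrow> real) \<Rightarrow> (nat \<Rightarrow> real \<Rightarrow> real) \<Rightarrow> bool" where
  "tightening_seq L caseA pc l \<iota> \<phi> \<pi> \<longleftrightarrow>
    (\<forall>i. 0 < L i \<and>
      (caseA i \<longrightarrow>
          unit_speed_path (pc i) (l i) (L i) (\<iota> i) \<and>
          unit_speed_path (pc i) (l i) (L (Suc i)) (\<phi> i) \<and>
          inj_on (\<iota> i) (pint (pc i) (l i)) \<and>
          inj_on (\<phi> i) (pint (pc i) (l i)) \<and>
          L 0 / 2 \<le> l i \<and> L (Suc i) < L i) \<and>
      (\<not> caseA i \<longrightarrow>
          pc i \<and> l i = L i \<and> L (Suc i) = L i \<and>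
          (\<forall>t\<in>circ_pts (L i). \<iota> i t = t \<and> \<phi> i t = t)) \<and>
      \<pi> i ` circ_pts (L i) \<subseteq> circ_pts (L (Suc i)) \<and>
      (\<forall>t\<in>pdom (pc i) (l i). \<pi> i (\<iota> i t) = \<phi> i t) \<and>
      (caseA i \<longrightarrow>
          (let Q = Qset True (L i) (pc i) (l i) (\<iota> i);
               Qb = Qset True (L (Suc i)) (pc i) (l i) (\<phi> i) in
           \<pi> i ` Q = Qb \<and>
           (\<forall>x\<in>Q. \<forall>y\<in>Q. circ_dist (L (Suc i)) (\<pi> i x) (\<pi> i y)
                 = measure lborel Qb / measure lborel Q * circ_dist (L i) x y))))"

definition completely_disjoint ::
  "(nat \<Rightarrow> real) \<Rightarrow> (nat \<Rightarrow> bool) \<Rightarrow> (nat \<Rightarrow> bool) \<Rightarrow> (nat \<Rightarrow> real) \<Rightarrow>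
   (nat \<Rightarrow> real \<Rightarrow> real) \<Rightarrow> (nat \<Rightarrow> real \<Rightarrow> real) \<Rightarrow> bool" where
  "completely_disjoint L caseA pc l \<iota> \<pi> \<longleftrightarrow>
    (\<forall>i. Qset (caseA i) (L i) (pc i) (l i) (\<iota> i) \<subseteq> P0 L pc l \<iota> \<pi> i)"

definition tightening_seq_for ::
  "real \<Rightarrow> (real \<Rightarrow> 'a::metric_space) \<Rightarrow> (nat \<Rightarrow> real) \<Rightarrow> (nat \<Rightarrow> bool) \<Rightarrow> (nat \<Rightarrow> bool) \<Rightarrow>
   (nat \<Rightarrow> real) \<Rightarrow> (nat \<Rightarrow> real \<Rightarrow> real) \<Rightarrow> (nat \<Rightarrow> real \<Rightarrow> real) \<Rightarrow> (nat \<Rightarrow> real \<Rightarrow> real) \<Rightarrow>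
   (nat \<Rightarrow> real \<Rightarrow> 'a) \<Rightarrow> bool" where
  "tightening_seq_for R \<alpha> L caseA pc l \<iota> \<phi> \<pi> \<alpha>s \<longleftrightarrow>
    tightening_seq L caseA pc l \<iota> \<phi> \<pi> \<and>
    (\<forall>x\<in>circ_pts (L 0). \<alpha>s 0 x = \<alpha> x) \<and>
    (\<forall>i. rcircle R (L i) (\<alpha>s i) \<and>
         (\<forall>t\<in>pdom (pc i) (l i). \<alpha>s i (\<iota> i t) = \<alpha>s (Suc i) (\<phi> i t)))"

definition Qlen :: "(nat \<Rightarrow> real) \<Rightarrow> (nat \<Rightarrow> bool) \<Rightarrow> (nat \<Rightarrow> bool) \<Rightarrow> (nat \<Rightarrow> real) \<Rightarrow>
   (nat \<Rightarrow> real \<Rightarrow> real) \<Rightarrow> nat \<Rightarrow> real" where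
  "Qlen L caseA pc l \<iota> i = measure lborel (Qset (caseA i) (L i) (pc i) (l i) (\<iota> i))"

definition tdelta :: "(nat \<Rightarrow> real) \<Rightarrow> (nat \<Rightarrow> real \<Rightarrow> real) \<Rightarrow> real \<Rightarrow> real \<Rightarrow> real" where
  "tdelta L \<pi> x y = lim (\<lambda>i. circ_dist (L i) (picomp \<pi> i x) (picomp \<pi> i y))"

definition Sinf :: "(nat \<Rightarrow> real) \<Rightarrow> (nat \<Rightarrow> real \<Rightarrow> real) \<Rightarrow> real set set" where
  "Sinf L \<pi> = (\<lambda>x. {y\<in>circ_pts (L 0). tdelta L \<pi> x y = 0}) ` circ_pts (L 0)"

end

theory Submission
  imports Defs
begin

definition dZ :: "real \<Rightarrow> real" where "dZ w = min (frac w) (1 - frac w)"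

lemma dZ_le: "dZ w \<le> \<bar>w - of_int n\<bar>"
proof (cases "n \<le> floor w")
  case True
  then have "frac w \<le> w - of_int n" unfolding frac_def
    by (simp add: le_floor_iff)
  then show ?thesis unfolding dZ_def by auto
next
  case False
  then have "of_int n \<ge> of_int (floor w) + (1::real)" by simp
  then have "1 - frac w \<le> of_int n - w" unfolding frac_def by simp
  then show ?thesis unfolding dZ_def by auto
qed

lemma dZ_attain: "\<exists>n. dZ w = \<bar>w - of_int n\<bar>"
proof (cases "frac w \<le> 1 - frac w")
  case True
  then have "dZ w = \<bar>w - of_int (floor w)\<bar>" unfolding dZ_def frac_def by auto
  then show ?thesis by blast
next
  case False
  then have "dZ w = \<bar>w - of_int (floor w + 1)\<bar>" unfolding dZ_def frac_def
    using frac_lt_1[of w] unfolding frac_def by auto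
  then show ?thesis by blast
qed

lemma dZ_nonneg: "0 \<le> dZ w"
  unfolding dZ_def using frac_ge_0[of w] frac_lt_1[of w] by auto

lemma dZ_half: "dZ w \<le> 1/2"
  unfolding dZ_def by (auto simp: min_def)

lemma dZ_lip: "\<bar>dZ a - dZ b\<bar> \<le> \<bar>a - b\<bar>"
proof -
  obtain n where n: "dZ a = \<bar>a - of_int n\<bar>" using dZ_attain by blast
  obtain m where m: "dZ b = \<bar>b - of_int m\<bar>" using dZ_attain by blast
  have "dZ a \<le> \<bar>a - of_int m\<bar>" by (rule dZ_le)
  moreover have "dZ b \<le> \<bar>b - of_int n\<bar>" by (rule dZ_le)
  ultimately show ?thesis using n m by linarith
qed

lemma dZ_add: "dZ (a + b) \<le> dZ a + dZ b"
proof -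
  obtain n where n: "dZ a = \<bar>a - of_int n\<bar>" using dZ_attain by blast
  obtain m where m: "dZ b = \<bar>b - of_int m\<bar>" using dZ_attain by blast
  have "dZ (a+b) \<le> \<bar>a + b - of_int (n+m)\<bar>" by (rule dZ_le)
  then show ?thesis using n m by simp
qed

lemma dZ_small: "\<bar>w\<bar> \<le> 1/2 \<Longrightarrow> dZ w = \<bar>w\<bar>"
proof -
  assume a: "\<bar>w\<bar> \<le> 1/2"
  obtain n where n: "dZ w = \<bar>w - of_int n\<bar>" using dZ_attain by blast
  have "dZ w \<le> \<bar>w - of_int 0\<bar>" by (rule dZ_le)
  moreover have "\<bar>w - of_int n\<bar> \<ge> \<bar>w\<bar>"
  proof (cases "n = 0")
    case False
    then have "\<bar>(of_int n::real)\<bar> \<ge> 1" by linarith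
    then show ?thesis using a by linarith
  qed simp
  ultimately show ?thesis using n by simp
qed

lemma dZ_zero_iff: "dZ w = 0 \<longleftrightarrow> w \<in> \<int>"
proof
  assume "dZ w = 0"
  then obtain n where "\<bar>w - of_int n\<bar> = 0" using dZ_attain by metis
  then show "w \<in> \<int>" by (metis Ints_of_int eq_iff_diff_eq_0 abs_eq_0)
next
  assume "w \<in> \<int>"
  then obtain n where "w = of_int n" by (auto elim: Ints_cases)
  then show "dZ w = 0" using dZ_le[of w n] dZ_nonneg[of w] by simp
qed

lemma dZ_minus: "dZ (- w) = dZ w"
proof (cases "w \<in> \<int>")
  case True
  have a: "frac w = 0" using True frac_eq_0_iff by blast
  have b: "frac (-w) = 0" using True frac_eq_0_iff Ints_minus by blast
  show ?thesis unfolding dZ_def a b by simp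
next
  case False
  then show ?thesis unfolding dZ_def by (simp add: frac_neg min.commute)
qed

lemma dZ_shift: "dZ (w + of_int k) = dZ w"
proof -
  have "dZ (w + of_int k) \<le> dZ w + dZ (of_int k)" by (rule dZ_add)
  moreover have "dZ w \<le> dZ (w + of_int k) + dZ (- of_int k)" using dZ_add[of "w + of_int k" "- of_int k"] by simp
  moreover have "dZ (of_int k) = 0" "dZ (- of_int k) = 0" using dZ_zero_iff by auto
  ultimately show ?thesis by linarith
qed

lemma circ_dist_dZ: "0 < L \<Longrightarrow> circ_dist L x y = L * dZ ((x - y) / L)"
proof -
  assume L: "0 < L"
  have e: "\<bar>x - y\<bar> / L = \<bar>(x - y) / L\<bar>" using L by (simp add: abs_div)
  have a: "dZ \<bar>w\<bar> = dZ w" for w by (cases "w \<ge> 0") (auto simp: dZ_minus)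
  have "circ_dist L x y = L * dZ (\<bar>x - y\<bar> / L)" unfolding circ_dist_def dZ_def ..
  then show ?thesis unfolding e a .
qed

definition req :: "real \<Rightarrow> real \<Rightarrow> real \<Rightarrow> bool" where
  "req L x y \<longleftrightarrow> (\<exists>k::int. x = y + of_int k * L)"

definition rmod :: "real \<Rightarrow> real \<Rightarrow> real" where
  "rmod L x = x - L * of_int (floor (x / L))"

lemma rmod_range: "0 < L \<Longrightarrow> rmod L x \<in> {0..<L}"
proof -
  assume L: "0 < L"
  have "of_int (floor (x/L)) \<le> x / L" "x / L < of_int (floor (x/L)) + 1" by linarith+
  then have "L * of_int (floor (x/L)) \<le> L * (x / L)" "L * (x/L) < L * (of_int (floor (x/L)) + 1)"
    using L by (intro mult_left_mono mult_strict_left_mono; simp)+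
  then have "L * of_int (floor (x/L)) \<le> x" "x < L * of_int (floor (x/L)) + L"
    using L by (simp_all add: field_simps)
  then show ?thesis unfolding rmod_def by auto
qed

lemma req_rmod: "req L (rmod L x) x"
  unfolding req_def rmod_def by (rule exI[of _ "- floor (x/L)"]) simp

lemma req_refl: "req L x x" unfolding req_def by (rule exI[of _ 0]) simp
lemma req_sym: "req L x y \<Longrightarrow> req L y x"
  unfolding req_def by (metis add_diff_cancel_left' diff_add_cancel diff_minus_eq_add mult_minus_left of_int_minus)
lemma req_trans: "req L x y \<Longrightarrow> req L y z \<Longrightarrow> req L x z"
  unfolding req_def by (metis (no_types, opaque_lifting) add.assoc distrib_right of_int_add)
lemma req_add: "req L x y \<Longrightarrow> req L (x + c) (y + c)"
  unfolding req_def by auto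
lemma req_neg: "req L x y \<Longrightarrow> req L (- x) (- y)"
  unfolding req_def by (metis minus_add_distrib mult_minus_left of_int_minus)
lemma req_mult: "req L (x + of_int k * L) x"
  unfolding req_def by auto

lemma req_eq: "0 < L \<Longrightarrow> x \<in> {0..<L} \<Longrightarrow> y \<in> {0..<L} \<Longrightarrow> req L x y \<Longrightarrow> x = y"
proof -
  assume L: "0 < L" and x: "x \<in> {0..<L}" and y: "y \<in> {0..<L}" and "req L x y"
  then obtain k where k: "x = y + of_int k * L" unfolding req_def by blast
  have "k = 0"
  proof (rule ccontr)
    assume "k \<noteq> 0"
    then have "k \<ge> 1 \<or> k \<le> -1" by linarith
    then show False
    proof
      assume "k \<ge> 1" then have "of_int k * L \<ge> L" using L by (simp add: mult_le_cancel_right1)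
      then show False using k x y by auto
    next
      assume "k \<le> -1" then have "of_int k * L \<le> - L" using L
        by (metis mult_le_cancel_right mult_minus_left mult_1 of_int_le_iff of_int_minus of_int_1 less_le_not_le)
      then show False using k x y by auto
    qed
  qed
  then show ?thesis using k by simp
qed

lemma rmod_eq_iff: "0 < L \<Longrightarrow> y \<in> {0..<L} \<Longrightarrow> req L x y \<Longrightarrow> rmod L x = y"
  by (meson req_eq req_rmod req_trans rmod_range)

lemma cd_req: "0 < L \<Longrightarrow> req L x x' \<Longrightarrow> circ_dist L x y = circ_dist L x' y"
proof -
  assume L: "0 < L" and "req L x x'"
  then obtain k where k: "x = x' + of_int k * L" unfolding req_def by blast
  have "(x - y) / L = (x' - y)/L + of_int k" using k L by (simp add: field_simps)
  then show ?thesis using L by (simp add: circ_dist_dZ dZ_shift)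
qed

lemma cd_sym: "circ_dist L x y = circ_dist L y x"
  unfolding circ_dist_def by (simp add: abs_minus_commute)

lemma cd_req2: "0 < L \<Longrightarrow> req L y y' \<Longrightarrow> circ_dist L x y = circ_dist L x y'"
  using cd_req cd_sym by metis

lemma cd_transl: "circ_dist L (x + c) (y + c) = circ_dist L x y"
  unfolding circ_dist_def by simp

lemma cd_neg: "circ_dist L (- x) (- y) = circ_dist L x y"
  unfolding circ_dist_def by (simp add: abs_minus_commute)

lemma cd_diff: "circ_dist L x y = circ_dist L (x - y) 0"
  unfolding circ_dist_def by simp

lemma cd_nonneg: "0 < L \<Longrightarrow> 0 \<le> circ_dist L x y"
  by (simp add: circ_dist_dZ dZ_nonneg)

lemma cd_le_half: "0 < L \<Longrightarrow> circ_dist L x y \<le> L / 2"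
  using dZ_half by (simp add: circ_dist_dZ)

lemma cd_small: "0 < L \<Longrightarrow> \<bar>x - y\<bar> \<le> L / 2 \<Longrightarrow> circ_dist L x y = \<bar>x - y\<bar>"
proof -
  assume L: "0 < L" and a: "\<bar>x - y\<bar> \<le> L / 2"
  have "\<bar>(x - y) / L\<bar> \<le> 1/2" using a L by (simp add: field_simps abs_div)
  then show ?thesis using L by (simp add: circ_dist_dZ dZ_small abs_div)
qed

lemma cd_le: "0 < L \<Longrightarrow> circ_dist L x y \<le> \<bar>x - y\<bar>"
proof -
  assume L: "0 < L"
  have "dZ ((x - y)/L) \<le> \<bar>(x - y)/L - of_int 0\<bar>" by (rule dZ_le)
  then have "L * dZ ((x - y)/L) \<le> L * \<bar>(x - y)/L\<bar>" using L by (intro mult_left_mono) auto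
  also have "L * \<bar>(x - y)/L\<bar> = \<bar>x - y\<bar>" using L by (simp add: abs_div)
  finally show ?thesis using L by (simp add: circ_dist_dZ)
qed

lemma cd_tri: "0 < L \<Longrightarrow> circ_dist L x z \<le> circ_dist L x y + circ_dist L y z"
proof -
  assume L: "0 < L"
  have "(x - z)/L = (x - y)/L + (y - z)/L" by (simp add: add_divide_distrib[symmetric])
  then have "dZ ((x - z)/L) \<le> dZ ((x - y)/L) + dZ ((y - z)/L)" using dZ_add by metis
  then show ?thesis using L by (simp add: circ_dist_dZ distrib_left[symmetric])
qed

lemma cd_zero_iff: "0 < L \<Longrightarrow> circ_dist L x y = 0 \<longleftrightarrow> req L x y"
proof -
  assume L: "0 < L"
  have "circ_dist L x y = 0 \<longleftrightarrow> (x - y)/L \<in> \<int>" using L by (simp add: circ_dist_dZ dZ_zero_iff)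
  also have "\<dots> \<longleftrightarrow> req L x y"
  proof
    assume "(x - y)/L \<in> \<int>"
    then obtain k where "(x - y)/L = of_int k" by (auto elim: Ints_cases)
    then have "x = y + of_int k * L" using L by (simp add: field_simps)
    then show "req L x y" unfolding req_def by blast
  next
    assume "req L x y"
    then obtain k where "x = y + of_int k * L" unfolding req_def by blast
    then have "(x - y)/L = of_int k" using L by simp
    then show "(x - y)/L \<in> \<int>" by simp
  qed
  finally show ?thesis .
qed

lemma cd_solve: "0 < L \<Longrightarrow> circ_dist L x y = d \<Longrightarrow> req L x (y + d) \<or> req L x (y - d)"
proof -
  assume L: "0 < L" and d: "circ_dist L x y = d"
  obtain n where n: "dZ ((x - y)/L) = \<bar>(x - y)/L - of_int n\<bar>" using dZ_attain by blast
  have "d = L * \<bar>(x - y)/L - of_int n\<bar>" using d n L by (simp add: circ_dist_dZ)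
  also have "\<dots> = \<bar>L * ((x - y)/L - of_int n)\<bar>" using L by (simp add: abs_mult)
  also have "L * ((x - y)/L - of_int n) = x - y - of_int n * L" using L by (simp add: field_simps)
  finally have "x = y + d + of_int n * L \<or> x = y - d + of_int n * L" by linarith
  then show ?thesis unfolding req_def by blast
qed

lemma loc_const_Ioo:
  fixes g :: "real \<Rightarrow> 'b"
  assumes "\<forall>s\<in>{a<..<b}. \<exists>d>0. \<forall>x\<in>{a<..<b}. \<bar>x - s\<bar> < d \<longrightarrow> g x = g s"
    and "x \<in> {a<..<b}" "y \<in> {a<..<b}"
  shows "g x = g y"
proof (rule connected_local_const[OF connected_Ioo assms(2,3)], intro ballI)
  fix s assume s: "s \<in> {a<..<b}"
  then obtain d where d: "d > 0" "\<forall>x\<in>{a<..<b}. \<bar>x - s\<bar> < d \<longrightarrow> g x = g s" using assms(1) by blast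
  show "eventually (\<lambda>y. g s = g y) (at s within {a<..<b})"
    unfolding eventually_at using d by (metis dist_real_def)
qed

lemma req_small_eq: "0 < L \<Longrightarrow> req L x y \<Longrightarrow> \<bar>x - y\<bar> \<le> L / 2 \<Longrightarrow> x = y"
  by (metis cd_zero_iff cd_small abs_eq_0 eq_iff_diff_eq_0)

lemma req_add2: "req L x y \<Longrightarrow> req L u v \<Longrightarrow> req L (x + u) (y + v)"
  unfolding req_def by (metis (no_types, opaque_lifting) add.assoc add.left_commute distrib_right of_int_add)

lemma side_const:
  assumes L: "0 < L" and t: "t = a \<or> t = b" and ab: "a < b" "b - a \<le> L / 4"
    and H1: "\<forall>s\<in>{a<..<b}. circ_dist L (f s) (f t) = \<bar>s - t\<bar>"
    and H2: "\<forall>s\<in>{a<..<b}. \<exists>d>0. \<forall>x\<in>{a<..<b}. \<bar>x - s\<bar> < d \<longrightarrow> circ_dist L (f x) (f s) = \<bar>x - s\<bar>"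
  shows "\<exists>\<sigma>. (\<sigma> = 1 \<or> \<sigma> = -1) \<and> (\<forall>s\<in>{a<..<b}. req L (f s) (f t + \<sigma> * (s - t)))"
proof -
  define sg where "sg s = (if req L (f s) (f t + (s - t)) then 1 else (-1::real))" for s
  have P: "req L (f s) (f t + sg s * (s - t))" if s: "s \<in> {a<..<b}" for s
  proof -
    have "req L (f s) (f t + \<bar>s - t\<bar>) \<or> req L (f s) (f t - \<bar>s - t\<bar>)"
      using cd_solve[OF L H1[rule_format, OF s]] .
    moreover have "(f t + \<bar>s - t\<bar> = f t + (s - t) \<and> f t - \<bar>s - t\<bar> = f t - (s - t)) \<or>
       (f t + \<bar>s - t\<bar> = f t - (s - t) \<and> f t - \<bar>s - t\<bar> = f t + (s - t))"
      by (cases "s \<ge> t") (simp_all add: abs_if)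
    ultimately have "req L (f s) (f t + (s - t)) \<or> req L (f s) (f t - (s - t))"
      by metis
    then show ?thesis unfolding sg_def by (auto simp: algebra_simps)
  qed
  have sgv: "sg s = 1 \<or> sg s = -1" for s unfolding sg_def by auto
  have lc: "\<forall>s\<in>{a<..<b}. \<exists>d>0. \<forall>x\<in>{a<..<b}. \<bar>x - s\<bar> < d \<longrightarrow> sg x = sg s"
  proof
    fix s assume s: "s \<in> {a<..<b}"
    obtain d where d: "d > 0" "\<forall>x\<in>{a<..<b}. \<bar>x - s\<bar> < d \<longrightarrow> circ_dist L (f x) (f s) = \<bar>x - s\<bar>"
      using H2 s by blast
    have "sg x = sg s" if x: "x \<in> {a<..<b}" "\<bar>x - s\<bar> < d" for x
    proof (rule ccontr)
      assume ne: "sg x \<noteq> sg s"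
      have "circ_dist L (f x) (f s) = circ_dist L (f t + sg x * (x - t)) (f t + sg s * (s - t))"
        using cd_req[OF L P[OF x(1)]] cd_req2[OF L P[OF s]] by simp
      also have "\<dots> = \<bar>sg x * (x - t) - sg s * (s - t)\<bar>"
      proof -
        have "\<bar>sg x * (x - t) - sg s * (s - t)\<bar> \<le> L / 2"
          using sgv[of x] sgv[of s] x s ab t by (auto simp: abs_if)
        then show ?thesis using cd_small[OF L] by (simp add: algebra_simps)
      qed
      also have "\<dots> = \<bar>x - t + (s - t)\<bar>"
        using sgv[of x] sgv[of s] ne by (auto simp: abs_if)
      finally have "\<bar>x - t + (s - t)\<bar> = \<bar>x - s\<bar>" using d x by simp
      then show False using x s t by (auto simp: abs_if split: if_splits)
    qed
    then show "\<exists>d>0. \<forall>x\<in>{a<..<b}. \<bar>x - s\<bar> < d \<longrightarrow> sg x = sg s" using d(1) by blast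
  qed
  define m where "m = (a + b) / 2"
  have m: "m \<in> {a<..<b}" using ab unfolding m_def by auto
  have "\<forall>s\<in>{a<..<b}. sg s = sg m" using loc_const_Ioo[OF lc] m by blast
  then show ?thesis using P sgv[of m] by (intro exI[of _ "sg m"]) auto
qed

lemma cd_solve': "0 < L \<Longrightarrow> circ_dist L A x = d \<Longrightarrow> req L x (A - d) \<or> req L x (A + d)"
proof -
  assume L: "0 < L" and "circ_dist L A x = d"
  then have "req L A (x + d) \<or> req L A (x - d)" using cd_solve by blast
  then show ?thesis
  proof
    assume "req L A (x + d)" then have "req L (A - d) (x + d - d)" using req_add[of L A "x+d" "-d"] by simp
    then show ?thesis using req_sym by auto
  next
    assume "req L A (x - d)" then have "req L (A + d) (x - d + d)" using req_add[of L A "x-d" "d"] by simp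
    then show ?thesis using req_sym by auto
  qed
qed

lemma two_pt:
  assumes L: "0 < L" and h: "0 < h" "h \<le> L / 4" and \<epsilon>: "\<epsilon> = 1 \<or> \<epsilon> = -1"
    and d1: "circ_dist L (q + \<epsilon> * h) x = h" and d2: "circ_dist L (q + \<epsilon> * (h/2)) x = h / 2"
  shows "req L x q"
proof (rule ccontr)
  assume nq: "\<not> req L x q"
  from cd_solve'[OF L d1] have 1: "req L x (q + \<epsilon> * h - h) \<or> req L x (q + \<epsilon> * h + h)" .
  from cd_solve'[OF L d2] have 2: "req L x (q + \<epsilon> * (h/2) - h/2) \<or> req L x (q + \<epsilon> * (h/2) + h/2)" .
  from \<epsilon> show False
  proof
    assume e: "\<epsilon> = 1"
    have "req L x (q + 2 * h)" "req L x (q + h)" using 1 2 nq e by (auto simp: algebra_simps)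
    then have "req L (q + 2 * h) (q + h)" using req_sym req_trans by blast
    moreover have "\<bar>(q + 2 * h) - (q + h)\<bar> \<le> L / 2" using h by simp
    ultimately have "q + 2 * h = q + h" using req_small_eq[OF L] by blast
    then show False using h by simp
  next
    assume e: "\<epsilon> = -1"
    have "req L x (q - 2 * h)" "req L x (q - h)" using 1 2 nq e by (auto simp: algebra_simps)
    then have "req L (q - 2 * h) (q - h)" using req_sym req_trans by blast
    moreover have "\<bar>(q - 2 * h) - (q - h)\<bar> \<le> L / 2" using h by simp
    ultimately have "q - 2 * h = q - h" using req_small_eq[OF L] by blast
    then show False using h by simp
  qed
qed

lemma rmod_req_eq: "0 < L \<Longrightarrow> req L x y \<Longrightarrow> rmod L x = rmod L y"
  by (meson req_rmod req_sym req_trans rmod_eq_iff rmod_range)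

lemma interior_lin:
  assumes L: "0 < L" and l: "0 < l"
    and f01: "\<forall>t\<in>{0..l}. f t \<in> {0..<L}"
    and loc: "\<forall>t\<in>{0..l}. \<exists>e>0. \<forall>s\<in>{0..l}. \<bar>s - t\<bar> < e \<longrightarrow> circ_dist L (f s) (f t) = \<bar>s - t\<bar>"
    and inj: "inj_on f {0<..<l}" and t: "t \<in> {0<..<l}"
  shows "\<exists>\<sigma>. (\<sigma> = 1 \<or> \<sigma> = -1) \<and> (\<exists>e>0. e \<le> L / 4 \<and>
            (\<forall>s. \<bar>s - t\<bar> < e \<longrightarrow> s \<in> {0<..<l} \<and> req L (f s) (f t + \<sigma> * (s - t))))"
proof -
  obtain et where et: "et > 0" "\<forall>s\<in>{0..l}. \<bar>s - t\<bar> < et \<longrightarrow> circ_dist L (f s) (f t) = \<bar>s - t\<bar>"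
    using loc t by (meson atLeastAtMost_iff greaterThanLessThan_iff less_imp_le)
  define e where "e = min (min et t) (min (l - t) (L / 4))"
  have e4: "e \<le> L / 4" unfolding e_def by (meson min.cobounded2 order.trans)
  have e: "0 < e" "e \<le> et" "e \<le> t" "e \<le> l - t" "e \<le> L / 4" using et t L e4 unfolding e_def by (simp_all add: min_le_iff_disj)
  have H2: "\<forall>s\<in>{a<..<b}. \<exists>d>0. \<forall>x\<in>{a<..<b}. \<bar>x - s\<bar> < d \<longrightarrow> circ_dist L (f x) (f s) = \<bar>x - s\<bar>"
    if "{a<..<b} \<subseteq> {0..l}" for a b
  proof
    fix s assume s: "s \<in> {a<..<b}"
    have s0: "s \<in> {0..l}" using s that by blast
    obtain d where d: "d > 0" "\<forall>x\<in>{0..l}. \<bar>x - s\<bar> < d \<longrightarrow> circ_dist L (f x) (f s) = \<bar>x - s\<bar>"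
      using loc s0 by blast
    have "\<forall>x\<in>{a<..<b}. \<bar>x - s\<bar> < d \<longrightarrow> circ_dist L (f x) (f s) = \<bar>x - s\<bar>"
      using d(2) that by blast
    then show "\<exists>d>0. \<forall>x\<in>{a<..<b}. \<bar>x - s\<bar> < d \<longrightarrow> circ_dist L (f x) (f s) = \<bar>x - s\<bar>"
      using d(1) by blast
  qed
  have sub1: "{t<..<t+e} \<subseteq> {0..l}" using e t by auto
  have H11: "\<forall>s\<in>{t<..<t+e}. circ_dist L (f s) (f t) = \<bar>s - t\<bar>" using et e by auto
  have "\<exists>\<sigma>. (\<sigma> = 1 \<or> \<sigma> = -1) \<and> (\<forall>s\<in>{t<..<t+e}. req L (f s) (f t + \<sigma> * (s - t)))"
    by (rule side_const[OF L _ _ _ H11 H2[OF sub1]]) (use e in auto)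
  then obtain \<sigma>1 where s1: "\<sigma>1 = 1 \<or> \<sigma>1 = -1" "\<forall>s\<in>{t<..<t+e}. req L (f s) (f t + \<sigma>1 * (s - t))"
    by blast
  have sub2: "{t-e<..<t} \<subseteq> {0..l}" using e t by auto
  have H12: "\<forall>s\<in>{t-e<..<t}. circ_dist L (f s) (f t) = \<bar>s - t\<bar>" using et e by auto
  have "\<exists>\<sigma>. (\<sigma> = 1 \<or> \<sigma> = -1) \<and> (\<forall>s\<in>{t-e<..<t}. req L (f s) (f t + \<sigma> * (s - t)))"
    by (rule side_const[OF L _ _ _ H12 H2[OF sub2]]) (use e in auto)
  then obtain \<sigma>2 where s2: "\<sigma>2 = 1 \<or> \<sigma>2 = -1" "\<forall>s\<in>{t-e<..<t}. req L (f s) (f t + \<sigma>2 * (s - t))"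
    by blast
  have eq: "\<sigma>1 = \<sigma>2"
  proof (rule ccontr)
    assume ne: "\<sigma>1 \<noteq> \<sigma>2"
    have "t + e/2 \<in> {t<..<t+e}" "t - e/2 \<in> {t-e<..<t}" using e by auto
    then have a: "req L (f (t + e/2)) (f t + \<sigma>1 * (t + e/2 - t))"
      and b: "req L (f (t - e/2)) (f t + \<sigma>2 * (t - e/2 - t))" using s1(2) s2(2) by blast+
    have eqs: "\<sigma>2 * (t - e/2 - t) = \<sigma>1 * (t + e/2 - t)" using ne s1(1) s2(1) by auto
    have b': "req L (f (t - e/2)) (f t + \<sigma>1 * (t + e/2 - t))" using b by (simp only: eqs)
    have "req L (f (t + e/2)) (f (t - e/2))" using req_trans[OF a req_sym[OF b']] .
    moreover have "f (t + e/2) \<in> {0..<L}" "f (t - e/2) \<in> {0..<L}" using f01 e t by auto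
    ultimately have "f (t + e/2) = f (t - e/2)" using req_eq[OF L] by blast
    moreover have "t + e/2 \<in> {0<..<l}" "t - e/2 \<in> {0<..<l}" using e t by auto
    ultimately have "t + e/2 = t - e/2" using inj by (meson inj_onD)
    then show False using e by simp
  qed
  have "\<forall>s. \<bar>s - t\<bar> < e \<longrightarrow> s \<in> {0<..<l} \<and> req L (f s) (f t + \<sigma>1 * (s - t))"
  proof (intro allI impI)
    fix s assume s: "\<bar>s - t\<bar> < e"
    have "s \<in> {0<..<l}" using s e t by auto
    moreover have "req L (f s) (f t + \<sigma>1 * (s - t))"
    proof (cases "s = t")
      case True then show ?thesis using req_refl by simp
    next
      case False
      then have "s \<in> {t<..<t+e} \<or> s \<in> {t-e<..<t}" using s by auto
      then show ?thesis using s1 s2 eq by auto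
    qed
    ultimately show "s \<in> {0<..<l} \<and> req L (f s) (f t + \<sigma>1 * (s - t))" by blast
  qed
  then show ?thesis using s1(1) e by blast
qed

lemma usp_rigid:
  assumes L: "0 < L" and l: "0 < l"
    and f01: "\<forall>t\<in>{0..l}. f t \<in> {0..<L}"
    and loc: "\<forall>t\<in>{0..l}. \<exists>e>0. \<forall>s\<in>{0..l}. \<bar>s - t\<bar> < e \<longrightarrow> circ_dist L (f s) (f t) = \<bar>s - t\<bar>"
    and inj: "inj_on f {0<..<l}"
  shows "\<exists>\<epsilon>. (\<epsilon> = 1 \<or> \<epsilon> = -1) \<and> (\<forall>t\<in>{0..l}. req L (f t) (f 0 + \<epsilon> * t))"
proof -
  define P where "P t \<sigma> e \<longleftrightarrow> (\<sigma> = 1 \<or> \<sigma> = -1) \<and> e > 0 \<and> e \<le> L / 4 \<and>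
      (\<forall>s. \<bar>s - t\<bar> < e \<longrightarrow> s \<in> {0<..<l} \<and> req L (f s) (f t + \<sigma> * (s - t)))" for t \<sigma> e
  have ex: "\<exists>\<sigma> e. P t \<sigma> e" if "t \<in> {0<..<l}" for t
    using interior_lin[OF L l f01 loc inj that] unfolding P_def by blast
  define sig where "sig t = (SOME \<sigma>. \<exists>e. P t \<sigma> e)" for t
  have sigP: "\<exists>e. P t (sig t) e" if "t \<in> {0<..<l}" for t
    unfolding sig_def using someI_ex[OF ex[OF that]] .
  define F where "F t = (sig t, rmod L (f t - sig t * t))" for t
  have lc: "\<forall>t\<in>{0<..<l}. \<exists>d>0. \<forall>x\<in>{0<..<l}. \<bar>x - t\<bar> < d \<longrightarrow> F x = F t"
  proof
    fix t assume t: "t \<in> {0<..<l}"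
    obtain e where e: "P t (sig t) e" using sigP[OF t] by blast
    have "F x = F t" if x: "x \<in> {0<..<l}" "\<bar>x - t\<bar> < e / 2" for x
    proof -
      obtain e' where e': "P x (sig x) e'" using sigP[OF x(1)] by blast
      define h where "h = min e' (e / 2) / 2"
      have h: "0 < h" "h < e'" "h \<le> e / 4" using e e' unfolding P_def h_def by auto
      have "\<bar>(x + h) - x\<bar> < e'" using h by simp
      moreover have "\<forall>s. \<bar>s - x\<bar> < e' \<longrightarrow> req L (f s) (f x + sig x * (s - x))"
        using e' unfolding P_def by blast
      ultimately have "req L (f (x + h)) (f x + sig x * (x + h - x))" by blast
      then have r1: "req L (f (x + h)) (f x + sig x * h)" by simp
      have "\<bar>(x + h) - t\<bar> < e" using h x by (simp add: abs_if split: if_splits)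
      then have r2: "req L (f (x + h)) (f t + sig t * (x + h - t))" using e unfolding P_def by blast
      have "\<bar>x - t\<bar> < e" using x e unfolding P_def by auto
      then have r3: "req L (f x) (f t + sig t * (x - t))" using e unfolding P_def by blast
      have r4: "req L (f x + sig t * h) (f t + sig t * (x + h - t))"
        using req_add[OF r3, of "sig t * h"] by (simp add: algebra_simps)
      have "req L (f x + sig x * h) (f x + sig t * h)"
        using req_trans[OF req_sym[OF r1] req_trans[OF r2 req_sym[OF r4]]] .
      moreover have "\<bar>(f x + sig x * h) - (f x + sig t * h)\<bar> \<le> L / 2"
        using e e' h unfolding P_def by auto
      ultimately have "f x + sig x * h = f x + sig t * h" using req_small_eq[OF L] by blast
      then have s: "sig x = sig t" using h by simp
      have "req L (f x - sig t * x) (f t + sig t * (x - t) - sig t * x)"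
        using req_add[OF r3, of "- sig t * x"] by simp
      then have "req L (f x - sig t * x) (f t - sig t * t)" by (simp add: algebra_simps)
      then have "rmod L (f x - sig x * x) = rmod L (f t - sig t * t)" using s rmod_req_eq[OF L] by simp
      then show ?thesis unfolding F_def using s by simp
    qed
    moreover have "e / 2 > 0" using e unfolding P_def by auto
    ultimately show "\<exists>d>0. \<forall>x\<in>{0<..<l}. \<bar>x - t\<bar> < d \<longrightarrow> F x = F t" by blast
  qed
  define m where "m = l / 2"
  have m: "m \<in> {0<..<l}" using l unfolding m_def by auto
  define \<epsilon> where "\<epsilon> = sig m"
  define c where "c = f m - \<epsilon> * m"
  have \<epsilon>: "\<epsilon> = 1 \<or> \<epsilon> = -1" using sigP[OF m] unfolding P_def \<epsilon>_def by blast
  have int: "req L (f t) (c + \<epsilon> * t)" if t: "t \<in> {0<..<l}" for t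
  proof -
    have "F t = F m" using loc_const_Ioo[OF lc t m] .
    then have "sig t = \<epsilon>" "rmod L (f t - \<epsilon> * t) = rmod L c" unfolding F_def \<epsilon>_def c_def by auto
    then have "req L (f t - \<epsilon> * t) c"
      by (metis req_rmod req_sym req_trans)
    then show ?thesis using req_add[of L "f t - \<epsilon> * t" c "\<epsilon> * t"] by simp
  qed
  have z: "req L (f 0) c"
  proof -
    obtain e0 where e0: "e0 > 0" "\<forall>s\<in>{0..l}. \<bar>s - 0\<bar> < e0 \<longrightarrow> circ_dist L (f s) (f 0) = \<bar>s - 0\<bar>"
      using loc l by fastforce
    define h where "h = min (min e0 l) L / 4"
    have h: "0 < h" "h < e0" "h < l" "h \<le> L / 4" using e0 l L unfolding h_def by (auto simp: min_def)
    have d1: "circ_dist L (c + \<epsilon> * h) (f 0) = h"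
    proof -
      have "circ_dist L (f h) (f 0) = h" using e0 h by auto
      moreover have "h \<in> {0<..<l}" using h by auto
      ultimately show ?thesis using cd_req[OF L req_sym[OF int[of h]]] by simp
    qed
    have d2: "circ_dist L (c + \<epsilon> * (h/2)) (f 0) = h / 2"
    proof -
      have "circ_dist L (f (h/2)) (f 0) = h / 2" using e0 h by auto
      moreover have "h/2 \<in> {0<..<l}" using h by auto
      ultimately show ?thesis using cd_req[OF L req_sym[OF int[of "h/2"]]] by simp
    qed
    show ?thesis using two_pt[OF L h(1) h(4) \<epsilon> d1 d2] .
  qed
  have ll: "req L (f l) (c + \<epsilon> * l)"
  proof -
    obtain e0 where e0: "e0 > 0" "\<forall>s\<in>{0..l}. \<bar>s - l\<bar> < e0 \<longrightarrow> circ_dist L (f s) (f l) = \<bar>s - l\<bar>"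
      using loc l by fastforce
    define h where "h = min (min e0 l) L / 4"
    have h: "0 < h" "h < e0" "h < l" "h \<le> L / 4" using e0 l L unfolding h_def by (auto simp: min_def)
    have \<epsilon>': "- \<epsilon> = 1 \<or> - \<epsilon> = -1" using \<epsilon> by auto
    have d1: "circ_dist L ((c + \<epsilon> * l) + (- \<epsilon>) * h) (f l) = h"
    proof -
      have "circ_dist L (f (l - h)) (f l) = h" using e0 h by auto
      moreover have eq: "(c + \<epsilon> * l) + (- \<epsilon>) * h = c + \<epsilon> * (l - h)" by (simp add: algebra_simps)
      moreover have "l - h \<in> {0<..<l}" using h by auto
      ultimately show ?thesis unfolding eq using cd_req[OF L req_sym[OF int[of "l-h"]]] by simp
    qed
    have d2: "circ_dist L ((c + \<epsilon> * l) + (- \<epsilon>) * (h/2)) (f l) = h / 2"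
    proof -
      have "circ_dist L (f (l - h/2)) (f l) = h / 2" using e0 h by auto
      moreover have eq: "(c + \<epsilon> * l) + (- \<epsilon>) * (h/2) = c + \<epsilon> * (l - h/2)" by (simp add: algebra_simps)
      moreover have "l - h/2 \<in> {0<..<l}" using h by auto
      ultimately show ?thesis unfolding eq using cd_req[OF L req_sym[OF int[of "l-h/2"]]] by simp
    qed
    show ?thesis using two_pt[OF L h(1) h(4) \<epsilon>' d1 d2] .
  qed
  have all: "req L (f t) (c + \<epsilon> * t)" if t: "t \<in> {0..l}" for t
  proof -
    consider "t = 0" | "t = l" | "t \<in> {0<..<l}" using t by fastforce
    then show ?thesis
    proof cases
      case 1 then show ?thesis using z by simp
    next
      case 2 then show ?thesis using ll by simp
    qed (rule int)
  qed
  have "req L (f t) (f 0 + \<epsilon> * t)" if t: "t \<in> {0..l}" for t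
    using req_trans[OF all[OF t] req_add[OF req_sym[OF z], of "\<epsilon> * t"]] by simp
  then show ?thesis using \<epsilon> by blast
qed

lemma req_zero_False: "0 < L \<Longrightarrow> req L x 0 \<Longrightarrow> 0 < x \<Longrightarrow> x < L \<Longrightarrow> False"
  using req_eq[of L x 0] by auto

lemma usp_form:
  assumes L: "0 < L" and l: "0 < l" and u: "unit_speed_path False l L f" and inj: "inj_on f {0<..<l}"
  shows "\<exists>\<epsilon>. (\<epsilon> = 1 \<or> \<epsilon> = -1) \<and> (\<forall>t\<in>{0..l}. f t = rmod L (f 0 + \<epsilon> * t))"
proof -
  have f01: "\<forall>t\<in>{0..l}. f t \<in> {0..<L}" using u unfolding unit_speed_path_def pdom_def circ_pts_def by auto
  have loc: "\<forall>t\<in>{0..l}. \<exists>e>0. \<forall>s\<in>{0..l}. \<bar>s - t\<bar> < e \<longrightarrow> circ_dist L (f s) (f t) = \<bar>s - t\<bar>"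
    using u unfolding unit_speed_path_def pdom_def pdist_def by simp
  obtain \<epsilon> where \<epsilon>: "\<epsilon> = 1 \<or> \<epsilon> = -1" "\<forall>t\<in>{0..l}. req L (f t) (f 0 + \<epsilon> * t)"
    using usp_rigid[OF L l f01 loc inj] by blast
  have "\<forall>t\<in>{0..l}. f t = rmod L (f 0 + \<epsilon> * t)"
    using \<epsilon>(2) f01 rmod_eq_iff[OF L] req_sym by metis
  then show ?thesis using \<epsilon>(1) by blast
qed

lemma usp_len:
  assumes L: "0 < L" and l: "0 < l" and \<epsilon>: "\<epsilon> = 1 \<or> \<epsilon> = -1"
    and f: "\<forall>t\<in>{0..l}. f t = rmod L (a + \<epsilon> * t)" and inj: "inj_on f {0<..<l}"
  shows "l \<le> L"
proof (rule ccontr)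
  assume "\<not> l \<le> L"
  define t where "t = (l - L) / 2"
  have t: "t \<in> {0<..<l}" "t + L \<in> {0<..<l}" using L l \<open>\<not> l \<le> L\<close> unfolding t_def by (auto simp: field_simps)
  have "req L (a + \<epsilon> * (t + L)) (a + \<epsilon> * t)"
    using \<epsilon> req_mult[of L "a + \<epsilon> * t" 1] req_mult[of L "a + \<epsilon> * t" "-1"] by (auto simp: algebra_simps)
  then have "f (t + L) = f t" using f t rmod_req_eq[OF L] by auto
  then have "t + L = t" using inj t by (meson inj_onD)
  then show False using L by simp
qed

lemma usp_circle:
  assumes L: "0 < L" and l: "0 < l" and u: "unit_speed_path True l L f" and inj: "inj_on f {0..<l}"
  shows "l = L"
proof -
  have f01: "\<forall>t\<in>{0..<l}. f t \<in> {0..<L}" using u unfolding unit_speed_path_def pdom_def circ_pts_def by auto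
  have locc: "\<forall>t\<in>{0..<l}. \<exists>e>0. \<forall>s\<in>{0..<l}. circ_dist l s t < e \<longrightarrow> circ_dist L (f s) (f t) = circ_dist l s t"
    using u unfolding unit_speed_path_def pdom_def pdist_def by simp
  have restr: "\<exists>\<epsilon>. (\<epsilon> = 1 \<or> \<epsilon> = -1) \<and> (\<forall>t\<in>{0..m}. f t = rmod L (f 0 + \<epsilon> * t))"
    if m: "0 < m" "m < l" for m
  proof -
    have um: "unit_speed_path False m L f"
      unfolding unit_speed_path_def pdom_def pdist_def
    proof (simp, intro conjI ballI)
      show "f ` {0..m} \<subseteq> circ_pts L" using f01 m unfolding circ_pts_def by auto
    next
      fix t assume t: "t \<in> {0..m}"
      then obtain e where e: "e > 0" "\<forall>s\<in>{0..<l}. circ_dist l s t < e \<longrightarrow> circ_dist L (f s) (f t) = circ_dist l s t"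
        using locc m by fastforce
      have "\<forall>s\<in>{0..m}. \<bar>s - t\<bar> < min e (l/2) \<longrightarrow> circ_dist L (f s) (f t) = \<bar>s - t\<bar>"
      proof (intro ballI impI)
        fix s assume s: "s \<in> {0..m}" "\<bar>s - t\<bar> < min e (l/2)"
        have "circ_dist l s t = \<bar>s - t\<bar>" using cd_small[OF l] s by auto
        then show "circ_dist L (f s) (f t) = \<bar>s - t\<bar>" using e s m by auto
      qed
      moreover have "min e (l/2) > 0" using e l by auto
      ultimately show "\<exists>e>0. \<forall>s\<in>{0..m}. \<bar>s - t\<bar> < e \<longrightarrow> circ_dist L (f s) (f t) = \<bar>s - t\<bar>" by blast
    qed
    have "inj_on f {0<..<m}" using m by (intro inj_on_subset[OF inj]) auto
    then show ?thesis using usp_form[OF L m(1) um] by blast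
  qed
  have le: "l \<le> L"
  proof (rule ccontr)
    assume "\<not> l \<le> L"
    define m where "m = (l + L) / 2"
    have m: "0 < m" "m < l" "L < m" using L l \<open>\<not> l \<le> L\<close> unfolding m_def by auto
    obtain \<epsilon> where \<epsilon>: "\<epsilon> = 1 \<or> \<epsilon> = -1" "\<forall>t\<in>{0..m}. f t = rmod L (f 0 + \<epsilon> * t)"
      using restr[OF m(1,2)] by blast
    have "inj_on f {0<..<m}" using m by (intro inj_on_subset[OF inj]) auto
    then have "m \<le> L" using usp_len[OF L m(1) \<epsilon>] by blast
    then show False using m by simp
  qed
  obtain e0 where e0: "e0 > 0" "\<forall>s\<in>{0..<l}. circ_dist l s 0 < e0 \<longrightarrow> circ_dist L (f s) (f 0) = circ_dist l s 0"
    using locc l by fastforce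
  define h where "h = min e0 l / 4"
  have "min e0 l \<le> e0" "min e0 l \<le> l" "0 < min e0 l" using e0 l by auto
  then have h: "0 < h" "h < e0" "h < l / 2" unfolding h_def by linarith+
  obtain \<epsilon> where \<epsilon>: "\<epsilon> = 1 \<or> \<epsilon> = -1" "\<forall>t\<in>{0..l - h}. f t = rmod L (f 0 + \<epsilon> * t)"
    using restr[of "l - h"] h by auto
  have "circ_dist l (l - h) 0 = circ_dist l (- h) 0"
    using cd_req[OF l req_mult[of l "- h" 1]] by simp
  also have "\<dots> = h" using cd_small[OF l] h by simp
  finally have c1: "circ_dist l (l - h) 0 = h" .
  have lh: "l - h \<in> {0..<l}" using h by auto
  have "circ_dist L (f (l - h)) (f 0) = circ_dist l (l - h) 0" using e0(2) lh c1 h(2) by simp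
  then have "circ_dist L (f (l - h)) (f 0) = h" using c1 by simp
  moreover have "l - h \<in> {0..l - h}" using h by auto
  then have "f (l - h) = rmod L (f 0 + \<epsilon> * (l - h))" using \<epsilon>(2) by blast
  ultimately have "circ_dist L (f 0 + \<epsilon> * (l - h)) (f 0) = h"
    using cd_req[OF L req_rmod, of "f 0 + \<epsilon> * (l - h)"] by simp
  moreover have "circ_dist L (f 0 + \<epsilon> * (l - h)) (f 0) = circ_dist L (\<epsilon> * (l - h)) 0"
    using cd_diff[of L "f 0 + \<epsilon> * (l - h)" "f 0"] by simp
  ultimately have "circ_dist L (\<epsilon> * (l - h)) 0 = h" by simp
  then have "circ_dist L (l - h) 0 = h"
  proof (cases "\<epsilon> = 1")
    case False
    then have "\<epsilon> = -1" using \<epsilon>(1) by simp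
    moreover assume "circ_dist L (\<epsilon> * (l - h)) 0 = h"
    ultimately show ?thesis using cd_neg[of L "l - h" 0] by simp
  qed simp
  then have "req L (l - h) (0 + h) \<or> req L (l - h) (0 - h)" using cd_solve[OF L] by blast
  then show ?thesis
  proof
    assume "req L (l - h) (0 + h)"
    moreover have "l - h \<in> {0..<L}" "0 + h \<in> {0..<L}" using h le by auto
    ultimately have "l - h = h" using req_eq[OF L] by force
    then show ?thesis using h by simp
  next
    assume "req L (l - h) (0 - h)"
    then have "req L l 0" using req_add[of L "l - h" "0 - h" h] by simp
    then show ?thesis using req_zero_False[OF L _ l] le by force
  qed
qed

definition Mf :: "real \<Rightarrow> real \<Rightarrow> real \<Rightarrow> real" where
  "Mf L l u = of_int (floor (u / L)) * (L - l) + max 0 (rmod L u - l)"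

lemma rmod_decomp: "u = rmod L u + of_int (floor (u / L)) * L"
  unfolding rmod_def by simp

lemma floor_rmod: "0 < L \<Longrightarrow> floor (rmod L u / L) = 0"
  using rmod_range[of L u] by (simp add: floor_eq_iff field_simps)

lemma rmod_rmod: assumes L: "0 < L" shows "rmod L (rmod L u) = rmod L u"
  by (rule rmod_eq_iff[OF L rmod_range[OF L] req_refl])

lemma Mf_rmod: "0 < L \<Longrightarrow> Mf L l u = of_int (floor (u / L)) * (L - l) + Mf L l (rmod L u)"
  unfolding Mf_def using floor_rmod rmod_rmod by simp

lemma Mf_lip:
  assumes L: "0 < L" and l: "0 \<le> l" "l \<le> L" and uv: "u \<le> v"
  shows "0 \<le> Mf L l v - Mf L l u \<and> Mf L l v - Mf L l u \<le> v - u"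
proof -
  define n where "n = floor (u / L)"
  define m where "m = floor (v / L)"
  define ru where "ru = rmod L u"
  define rv where "rv = rmod L v"
  have ru: "0 \<le> ru" "ru < L" using rmod_range[OF L] unfolding ru_def by auto
  have rv: "0 \<le> rv" "rv < L" using rmod_range[OF L] unfolding rv_def by auto
  have u: "u = ru + of_int n * L" unfolding ru_def n_def using rmod_decomp .
  have v: "v = rv + of_int m * L" unfolding rv_def m_def using rmod_decomp .
  have nm: "n \<le> m" unfolding n_def m_def using uv L by (intro floor_mono divide_right_mono) auto
  have Mu: "Mf L l u = of_int n * (L - l) + max 0 (ru - l)" unfolding Mf_def n_def ru_def ..
  have Mv: "Mf L l v = of_int m * (L - l) + max 0 (rv - l)" unfolding Mf_def m_def rv_def ..
  show ?thesis
  proof (cases "n = m")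
    case True
    then have "rv - ru = v - u" using u v by simp
    then show ?thesis unfolding Mu Mv using True uv by (auto simp: max_def)
  next
    case False
    then have k: "of_int (m - n) \<ge> (1::real)" using nm by simp
    define K where "K = (of_int (m - n) :: real)"
    have K: "K \<ge> 1" using k unfolding K_def .
    have K1: "K * (L - l) \<ge> L - l" using K l by (simp add: mult_le_cancel_right1)
    have K2: "K * l \<ge> l" using K l by (simp add: mult_le_cancel_right1)
    have d1: "Mf L l v - Mf L l u = K * (L - l) + max 0 (rv - l) - max 0 (ru - l)"
      unfolding Mu Mv K_def by (simp add: algebra_simps)
    have d2: "v - u = K * L + rv - ru" unfolding u v K_def by (simp add: algebra_simps)
    have d3: "K * (L - l) = K * L - K * l" by (simp add: algebra_simps)
    show ?thesis unfolding d1 d2 using K1 K2 d3 ru rv l by (auto simp: max_def)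
  qed
qed

lemma Mf_period: "0 < L \<Longrightarrow> Mf L l (u + L) = Mf L l u + (L - l)"
proof -
  assume L: "0 < L"
  have "floor ((u + L) / L) = floor (u / L) + 1"
    using L by (simp add: add_divide_distrib)
  moreover have "rmod L (u + L) = rmod L u"
    using rmod_req_eq[OF L req_mult[of L u 1]] by simp
  ultimately show ?thesis unfolding Mf_def by (simp add: algebra_simps)
qed

lemma reparam:
  assumes L: "0 < L" and L': "0 < L'"
    and \<epsilon>: "\<epsilon> = 1 \<or> \<epsilon> = -1" and \<epsilon>': "\<epsilon>' = 1 \<or> \<epsilon>' = -1"
    and mono0: "\<forall>u v. u \<le> v \<longrightarrow> \<psi>0 u \<le> \<psi>0 v"
    and lip0: "\<forall>u v. u \<le> v \<longrightarrow> \<psi>0 v - \<psi>0 u \<le> v - u"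
    and per0: "\<forall>u. \<psi>0 (u + L) = \<psi>0 u + L'"
    and can: "\<forall>w. \<pi> (rmod L (a + \<epsilon> * w)) = rmod L' (b + \<epsilon>' * \<psi>0 w)"
    and s: "s = 1 \<or> s = -1"
  shows "\<exists>\<psi> c' s'. (s' = 1 \<or> s' = -1) \<and> (\<forall>u v. u \<le> v \<longrightarrow> \<psi> u \<le> \<psi> v) \<and>
     (\<forall>u v. u \<le> v \<longrightarrow> \<psi> v - \<psi> u \<le> v - u) \<and> (\<forall>u. \<psi> (u + L) = \<psi> u + L') \<and>
     (\<forall>u. \<pi> (rmod L (c + s * u)) = rmod L' (c' + s' * \<psi> u))"
proof -
  define k0 where "k0 = \<epsilon> * (c - a)"
  have ee: "\<epsilon> * \<epsilon> = 1" using \<epsilon> by auto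
  show ?thesis
  proof (cases "\<epsilon> * s = 1")
    case True
    define \<psi> where "\<psi> u = \<psi>0 (u + k0)" for u
    have "\<pi> (rmod L (c + s * u)) = rmod L' (b + \<epsilon>' * \<psi> u)" for u
    proof -
      have "c + s * u = a + \<epsilon> * (u + k0)" unfolding k0_def using \<epsilon> s True by auto
      then show ?thesis using can unfolding \<psi>_def by metis
    qed
    moreover have "\<forall>u. \<psi> (u + L) = \<psi> u + L'" unfolding \<psi>_def using per0 by (metis add.commute add.left_commute)
    moreover have "\<forall>u v. u \<le> v \<longrightarrow> \<psi> u \<le> \<psi> v" unfolding \<psi>_def using mono0 by simp
    moreover have "\<forall>u v. u \<le> v \<longrightarrow> \<psi> v - \<psi> u \<le> v - u" unfolding \<psi>_def using lip0
      by (metis add_diff_cancel_right add_le_cancel_right)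
    ultimately have "(\<epsilon>' = 1 \<or> \<epsilon>' = -1) \<and> (\<forall>u v. u \<le> v \<longrightarrow> \<psi> u \<le> \<psi> v) \<and>
     (\<forall>u v. u \<le> v \<longrightarrow> \<psi> v - \<psi> u \<le> v - u) \<and> (\<forall>u. \<psi> (u + L) = \<psi> u + L') \<and>
     (\<forall>u. \<pi> (rmod L (c + s * u)) = rmod L' (b + \<epsilon>' * \<psi> u))" using \<epsilon>' by blast
    then show ?thesis by blast
  next
    case False
    then have es: "\<epsilon> * s = -1" using \<epsilon> s by auto
    define \<psi> where "\<psi> u = - \<psi>0 (- u + k0)" for u
    have "\<pi> (rmod L (c + s * u)) = rmod L' (b + (- \<epsilon>') * \<psi> u)" for u
    proof -
      have "c + s * u = a + \<epsilon> * (- u + k0)" unfolding k0_def using \<epsilon> s es by auto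
      then show ?thesis using can unfolding \<psi>_def by (metis minus_mult_minus)
    qed
    moreover have "\<psi> (u + L) = \<psi> u + L'" for u
    proof -
      have "\<psi>0 (- (u + L) + k0) + L' = \<psi>0 (- u + k0)" using per0[rule_format, of "- (u + L) + k0"] by simp
      then show ?thesis unfolding \<psi>_def by simp
    qed
    moreover have "\<forall>u v. u \<le> v \<longrightarrow> \<psi> u \<le> \<psi> v" unfolding \<psi>_def using mono0 by simp
    moreover have "\<forall>u v. u \<le> v \<longrightarrow> \<psi> v - \<psi> u \<le> v - u"
    proof (intro allI impI)
      fix u v :: real assume "u \<le> v"
      then have "- v + k0 \<le> - u + k0" by simp
      then have "\<psi>0 (- u + k0) - \<psi>0 (- v + k0) \<le> (- u + k0) - (- v + k0)" using lip0 by blast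
      then show "\<psi> v - \<psi> u \<le> v - u" unfolding \<psi>_def by simp
    qed
    ultimately have "(- \<epsilon>' = 1 \<or> - \<epsilon>' = -1) \<and> (\<forall>u v. u \<le> v \<longrightarrow> \<psi> u \<le> \<psi> v) \<and>
     (\<forall>u v. u \<le> v \<longrightarrow> \<psi> v - \<psi> u \<le> v - u) \<and> (\<forall>u. \<psi> (u + L) = \<psi> u + L') \<and>
     (\<forall>u. \<pi> (rmod L (c + s * u)) = rmod L' (b + (- \<epsilon>') * \<psi> u))" using \<epsilon>' by auto
    then show ?thesis by blast
  qed
qed

lemma req_affine: "req L x y \<Longrightarrow> \<epsilon> = 1 \<or> \<epsilon> = -1 \<Longrightarrow> req L (c + \<epsilon> * x) (c + \<epsilon> * y)"
proof -
  assume r: "req L x y" and e: "\<epsilon> = 1 \<or> \<epsilon> = -1"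
  from e show ?thesis
  proof
    assume "\<epsilon> = 1" then show ?thesis using req_add[OF r, of c] by (simp add: add.commute)
  next
    assume "\<epsilon> = -1" then show ?thesis using req_add[OF req_neg[OF r], of c] by (simp add: add.commute)
  qed
qed

lemma cd_affine: "\<epsilon> = 1 \<or> \<epsilon> = -1 \<Longrightarrow> circ_dist L (a + \<epsilon> * x) (a + \<epsilon> * y) = circ_dist L x y"
proof -
  assume e: "\<epsilon> = 1 \<or> \<epsilon> = -1"
  have "\<bar>a + \<epsilon> * x - (a + \<epsilon> * y)\<bar> = \<bar>x - y\<bar>" using e by (auto simp: abs_minus_commute)
  then show ?thesis unfolding circ_dist_def by simp
qed

lemma cd_rmod2: "0 < L \<Longrightarrow> circ_dist L (rmod L x) (rmod L y) = circ_dist L x y"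
  using cd_req[OF _ req_rmod] cd_req2[OF _ req_rmod] by metis

lemma cd_Lminus: "0 < L \<Longrightarrow> L / 2 \<le> x \<Longrightarrow> x \<le> L \<Longrightarrow> circ_dist L x 0 = L - x"
proof -
  assume L: "0 < L" and x: "L / 2 \<le> x" "x \<le> L"
  have "circ_dist L x 0 = circ_dist L (x + of_int (-1) * L) 0" using cd_req[OF L req_mult[of L x "-1"]] by simp
  also have "\<dots> = \<bar>x - L\<bar>" using cd_small[OF L, of "x - L" 0] x by simp
  finally show ?thesis using x by simp
qed

lemma combine:
  assumes L': "0 < L'" "L' < 2 * l" "l \<le> L'" and d: "0 \<le> d1" "0 \<le> d2" "d1 + d2 = L' - l"
    and z1: "req L' z (l - d1) \<or> req L' z (l + d1)"
    and z2: "req L' z (- d2) \<or> req L' z d2"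
  shows "req L' z (l + d1)"
proof (rule ccontr)
  assume n: "\<not> req L' z (l + d1)"
  then have z: "req L' z (l - d1)" using z1 by blast
  have d1: "d1 > 0" using z n d by (cases "d1 = 0") auto
  from z2 show False
  proof
    assume "req L' z (- d2)"
    then have "req L' (l - d1) (- d2)" using z req_sym req_trans by blast
    then have "req L' (l - d1 + d2) 0" using req_add[of L' "l - d1" "- d2" d2] by simp
    then show False using req_zero_False[OF L'(1)] d1 d L' by force
  next
    assume "req L' z d2"
    then have "req L' (l - d1) d2" using z req_sym req_trans by blast
    then have "req L' (l - d1 - d2) 0" using req_add[of L' "l - d1" d2 "- d2"] by simp
    then show False using req_zero_False[OF L'(1)] d1 d L' by force
  qed
qed

lemma rmod_eq_req: "rmod L x = rmod L y \<Longrightarrow> req L x y"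
  by (metis req_rmod req_sym req_trans)

lemma req_cancel: "req L (a + \<epsilon> * w) (a + \<epsilon> * t) \<Longrightarrow> \<epsilon> = 1 \<or> \<epsilon> = -1 \<Longrightarrow> req L w t"
  using req_affine[of L "a + \<epsilon> * w" "a + \<epsilon> * t" \<epsilon> "- \<epsilon> * a"] by (auto simp: algebra_simps)

lemma step_canon:
  assumes L: "0 < L" and L': "0 < L'" "L' < L" and l: "0 < l" "L \<le> 2 * l"
    and \<iota>: "unit_speed_path False l L \<iota>" "inj_on \<iota> {0<..<l}"
    and \<phi>: "unit_speed_path False l L' \<phi>" "inj_on \<phi> {0<..<l}"
    and \<pi>r: "\<forall>x\<in>{0..<L}. \<pi> x \<in> {0..<L'}"
    and \<pi>\<iota>: "\<forall>t\<in>{0..l}. \<pi> (\<iota> t) = \<phi> t"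
    and scal: "\<forall>x\<in>Q. \<forall>y\<in>Q. circ_dist L' (\<pi> x) (\<pi> y) = r * circ_dist L x y"
    and Qdef: "Q = {0..<L} - \<iota> ` {0<..<l}"
  shows "\<exists>a \<epsilon> b \<epsilon>' \<psi>0. (\<epsilon> = 1 \<or> \<epsilon> = -1) \<and> (\<epsilon>' = 1 \<or> \<epsilon>' = -1) \<and>
     (\<forall>u v. u \<le> v \<longrightarrow> \<psi>0 u \<le> \<psi>0 v) \<and> (\<forall>u v. u \<le> v \<longrightarrow> \<psi>0 v - \<psi>0 u \<le> v - u) \<and>
     (\<forall>u. \<psi>0 (u + L) = \<psi>0 u + L') \<and> (\<forall>w. \<pi> (rmod L (a + \<epsilon> * w)) = rmod L' (b + \<epsilon>' * \<psi>0 w))"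
proof -
  obtain \<epsilon> where \<epsilon>: "\<epsilon> = 1 \<or> \<epsilon> = -1" "\<forall>t\<in>{0..l}. \<iota> t = rmod L (\<iota> 0 + \<epsilon> * t)"
    using usp_form[OF L l(1) \<iota>] by blast
  obtain \<epsilon>' where \<epsilon>': "\<epsilon>' = 1 \<or> \<epsilon>' = -1" "\<forall>t\<in>{0..l}. \<phi> t = rmod L' (\<phi> 0 + \<epsilon>' * t)"
    using usp_form[OF L'(1) l(1) \<phi>] by blast
  obtain a where a: "a = \<iota> 0" by blast
  obtain b where b: "b = \<phi> 0" by blast
  have \<iota>f: "\<iota> t = rmod L (a + \<epsilon> * t)" if "t \<in> {0..l}" for t using \<epsilon>(2) that a by blast
  have \<phi>f: "\<phi> t = rmod L' (b + \<epsilon>' * t)" if "t \<in> {0..l}" for t using \<epsilon>'(2) that b by blast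
  have lL': "l \<le> L'"
    using usp_len[OF L'(1) l(1) \<epsilon>'(1), of \<phi> b] \<phi>f \<phi>(2) by blast
  have lL: "l < L" using lL' L' by simp
  have inI: "req L w t" if "rmod L (a + \<epsilon> * w) = \<iota> t" "t \<in> {0<..<l}" for w t
  proof -
    have "rmod L (a + \<epsilon> * w) = rmod L (a + \<epsilon> * t)" using that \<iota>f[of t] by auto
    then show ?thesis using req_cancel[OF rmod_eq_req \<epsilon>(1)] by blast
  qed
  have inQ: "rmod L (a + \<epsilon> * w) \<in> Q" if w: "w = 0 \<or> w \<in> {l..<L}" for w
  proof -
    have "rmod L (a + \<epsilon> * w) \<notin> \<iota> ` {0<..<l}"
    proof
      assume "rmod L (a + \<epsilon> * w) \<in> \<iota> ` {0<..<l}"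
      then obtain t where t: "t \<in> {0<..<l}" "rmod L (a + \<epsilon> * w) = \<iota> t" by blast
      then have r: "req L w t" using inI by blast
      from w show False
      proof
        assume "w = 0"
        then have "req L t 0" using r req_sym by blast
        moreover have "0 < t" "t < L" using t lL by auto
        ultimately show False using req_zero_False[OF L] by blast
      next
        assume "w \<in> {l..<L}"
        then have "w = t" using req_eq[OF L _ _ r] t lL by auto
        then show False using t \<open>w \<in> {l..<L}\<close> by auto
      qed
    qed
    then show ?thesis unfolding Qdef using rmod_range[OF L] by blast
  qed
  have i0: "\<iota> 0 = rmod L (a + \<epsilon> * 0)" using \<iota>f[of 0] l by auto
  have il: "\<iota> l = rmod L (a + \<epsilon> * l)" using \<iota>f[of l] l by auto
  have i0Q: "\<iota> 0 \<in> Q" using inQ[of 0] i0 by simp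
  have ilQ: "\<iota> l \<in> Q" using inQ[of l] il lL by simp
  have f0: "\<phi> 0 = rmod L' (b + \<epsilon>' * 0)" using \<phi>f[of 0] l by auto
  have fl: "\<phi> l = rmod L' (b + \<epsilon>' * l)" using \<phi>f[of l] l by auto
  have "circ_dist L (\<iota> 0) (\<iota> l) = circ_dist L 0 l" unfolding i0 il cd_rmod2[OF L] using cd_affine[OF \<epsilon>(1)] .
  also have "\<dots> = circ_dist L l 0" by (rule cd_sym)
  also have "\<dots> = L - l" using cd_Lminus[OF L, of l] l lL by simp
  finally have D1: "circ_dist L (\<iota> 0) (\<iota> l) = L - l" .
  have "circ_dist L' (\<phi> 0) (\<phi> l) = circ_dist L' 0 l" unfolding f0 fl cd_rmod2[OF L'(1)] using cd_affine[OF \<epsilon>'(1)] .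
  also have "\<dots> = circ_dist L' l 0" by (rule cd_sym)
  also have "\<dots> = L' - l" using cd_Lminus[OF L'(1), of l] l lL' L' by simp
  finally have D2: "circ_dist L' (\<phi> 0) (\<phi> l) = L' - l" .
  have "circ_dist L' (\<pi> (\<iota> 0)) (\<pi> (\<iota> l)) = r * circ_dist L (\<iota> 0) (\<iota> l)" using scal i0Q ilQ by blast
  moreover have pi0: "\<pi> (\<iota> 0) = \<phi> 0" and pil: "\<pi> (\<iota> l) = \<phi> l" using \<pi>\<iota> l by auto
  ultimately have rr: "L' - l = r * (L - l)" using D1 D2 by simp
  have rv: "r = (L' - l) / (L - l)" using rr lL by (simp add: field_simps)
  have r0: "0 \<le> r" unfolding rv using lL lL' by simp
  have r1: "r < 1" unfolding rv using lL L' by simp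
  have key: "(1 - r) * (L - l) = L - L'" using rr by (simp add: algebra_simps)
  define \<psi>0 where "\<psi>0 u = u - (1 - r) * Mf L l u" for u
  have mono0: "\<forall>u v. u \<le> v \<longrightarrow> \<psi>0 u \<le> \<psi>0 v" and lip0: "\<forall>u v. u \<le> v \<longrightarrow> \<psi>0 v - \<psi>0 u \<le> v - u"
  proof (safe)
    fix u v :: real assume uv: "u \<le> v"
    have M: "0 \<le> Mf L l v - Mf L l u" "Mf L l v - Mf L l u \<le> v - u" using Mf_lip[OF L _ _ uv] l lL by auto
    have "(1 - r) * (Mf L l v - Mf L l u) \<le> Mf L l v - Mf L l u"
      using mult_right_mono[of "1 - r" 1 "Mf L l v - Mf L l u"] M r0 by simp
    moreover have "0 \<le> (1 - r) * (Mf L l v - Mf L l u)" using M r1 by simp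
    moreover have "\<psi>0 v - \<psi>0 u = (v - u) - (1 - r) * (Mf L l v - Mf L l u)" unfolding \<psi>0_def by (simp add: algebra_simps)
    ultimately have "\<psi>0 u \<le> \<psi>0 v \<and> \<psi>0 v - \<psi>0 u \<le> v - u" using M by linarith
    then show "\<psi>0 u \<le> \<psi>0 v" "\<psi>0 v - \<psi>0 u \<le> v - u" by auto
  qed
  have per0: "\<forall>u. \<psi>0 (u + L) = \<psi>0 u + L'"
  proof
    fix u
    have "\<psi>0 (u + L) = u + L - (1 - r) * (Mf L l u + (L - l))" unfolding \<psi>0_def Mf_period[OF L] ..
    also have "\<dots> = \<psi>0 u + L - (1 - r) * (L - l)" unfolding \<psi>0_def by (simp add: algebra_simps)
    finally show "\<psi>0 (u + L) = \<psi>0 u + L'" using key by simp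
  qed
  have can0: "\<pi> (rmod L (a + \<epsilon> * \<rho>)) = rmod L' (b + \<epsilon>' * \<psi>0 \<rho>)" if \<rho>: "\<rho> \<in> {0..<L}" for \<rho>
  proof -
    have M\<rho>: "Mf L l \<rho> = max 0 (\<rho> - l)"
      unfolding Mf_def using floor_rmod[OF L, of \<rho>] rmod_eq_iff[OF L \<rho> req_refl] by simp
    show ?thesis
    proof (cases "\<rho> \<le> l")
      case True
      then have "\<psi>0 \<rho> = \<rho>" unfolding \<psi>0_def M\<rho> by simp
      moreover have "\<pi> (\<iota> \<rho>) = \<phi> \<rho>" using \<pi>\<iota> \<rho> True by auto
      ultimately show ?thesis using \<iota>f[of \<rho>] \<phi>f[of \<rho>] \<rho> True by auto
    next
      case False
      define d1 where "d1 = r * (\<rho> - l)"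
      define d2 where "d2 = r * (L - \<rho>)"
      have d01: "0 \<le> d1" unfolding d1_def using r0 False by simp
      have d02: "0 \<le> d2" unfolding d2_def using r0 \<rho> by simp
      have d12: "d1 + d2 = L' - l" unfolding d1_def d2_def using rr by (simp add: algebra_simps)
      note d = d01 d02 d12
      have \<psi>\<rho>: "\<psi>0 \<rho> = l + d1" unfolding \<psi>0_def M\<rho> d1_def using False by (simp add: algebra_simps)
      define x where "x = rmod L (a + \<epsilon> * \<rho>)"
      have xQ: "x \<in> Q" unfolding x_def using inQ \<rho> False by auto
      define y where "y = \<pi> x"
      have y: "y \<in> {0..<L'}" unfolding y_def x_def using \<pi>r rmod_range[OF L] by blast
      have "circ_dist L' y (\<phi> l) = r * circ_dist L x (\<iota> l)"
        unfolding y_def using scal[rule_format, OF xQ ilQ] pil by simp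
      also have "circ_dist L x (\<iota> l) = circ_dist L \<rho> l"
        unfolding x_def il cd_rmod2[OF L] using cd_affine[OF \<epsilon>(1)] .
      also have "\<dots> = \<rho> - l" using cd_small[OF L] \<rho> False l by auto
      finally have e1: "circ_dist L' (b + \<epsilon>' * l) y = d1"
        unfolding fl d1_def using cd_req[OF L'(1) req_rmod] cd_sym by metis
      have "circ_dist L' y (\<phi> 0) = r * circ_dist L x (\<iota> 0)"
        unfolding y_def using scal[rule_format, OF xQ i0Q] pi0 by simp
      also have "circ_dist L x (\<iota> 0) = circ_dist L \<rho> 0"
        unfolding x_def i0 cd_rmod2[OF L] using cd_affine[OF \<epsilon>(1)] .
      also have "\<dots> = L - \<rho>" using cd_Lminus[OF L] \<rho> False l by auto
      finally have e2: "circ_dist L' b y = d2"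
        unfolding f0 d2_def using cd_req[OF L'(1) req_rmod] cd_sym by (metis add_0_right mult_zero_right)
      define z where "z = - \<epsilon>' * b + \<epsilon>' * y"
      have ee: "\<epsilon>' * \<epsilon>' = 1" using \<epsilon>'(1) by auto
      have z1: "req L' z (l - d1) \<or> req L' z (l + d1)"
      proof -
        from cd_solve'[OF L'(1) e1] have "req L' y (b + \<epsilon>' * l - d1) \<or> req L' y (b + \<epsilon>' * l + d1)" .
        then have "req L' z (- \<epsilon>' * b + \<epsilon>' * (b + \<epsilon>' * l - d1)) \<or> req L' z (- \<epsilon>' * b + \<epsilon>' * (b + \<epsilon>' * l + d1))"
          unfolding z_def using req_affine[OF _ \<epsilon>'(1)] by blast
        then show ?thesis using \<epsilon>'(1) by (auto simp: algebra_simps)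
      qed
      have z2: "req L' z (- d2) \<or> req L' z d2"
      proof -
        from cd_solve'[OF L'(1) e2] have "req L' y (b - d2) \<or> req L' y (b + d2)" .
        then have "req L' z (- \<epsilon>' * b + \<epsilon>' * (b - d2)) \<or> req L' z (- \<epsilon>' * b + \<epsilon>' * (b + d2))"
          unfolding z_def using req_affine[OF _ \<epsilon>'(1)] by blast
        then show ?thesis using \<epsilon>'(1) by (auto simp: algebra_simps)
      qed
      have "req L' z (l + d1)" using combine[OF L'(1) _ lL' d z1 z2] L' l by simp
      then have "req L' (b + \<epsilon>' * z) (b + \<epsilon>' * (l + d1))" using req_affine[OF _ \<epsilon>'(1)] by blast
      moreover have "b + \<epsilon>' * z = y" unfolding z_def using \<epsilon>'(1) by (auto simp: algebra_simps)
      ultimately have "req L' y (b + \<epsilon>' * \<psi>0 \<rho>)" using \<psi>\<rho> by simp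
      then have "rmod L' (b + \<epsilon>' * \<psi>0 \<rho>) = y" using rmod_eq_iff[OF L'(1) y] req_sym by blast
      then show ?thesis unfolding y_def x_def by simp
    qed
  qed
  have can: "\<forall>w. \<pi> (rmod L (a + \<epsilon> * w)) = rmod L' (b + \<epsilon>' * \<psi>0 w)"
  proof
    fix w
    define \<rho> where "\<rho> = rmod L w"
    define n where "n = floor (w / L)"
    have wdec: "w = \<rho> + of_int n * L" unfolding \<rho>_def n_def by (rule rmod_decomp)
    have \<rho>: "\<rho> \<in> {0..<L}" unfolding \<rho>_def using rmod_range[OF L] .
    have "req L (a + \<epsilon> * w) (a + \<epsilon> * \<rho>)"
      using req_affine[OF req_sym[OF req_rmod[of L w]] \<epsilon>(1), of a] unfolding \<rho>_def .
    then have 1: "rmod L (a + \<epsilon> * w) = rmod L (a + \<epsilon> * \<rho>)" using rmod_req_eq[OF L] by blast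
    have MM: "Mf L l w = of_int n * (L - l) + Mf L l \<rho>" unfolding \<rho>_def n_def using Mf_rmod[OF L] .
    have "\<psi>0 w = w - (1 - r) * (of_int n * (L - l) + Mf L l \<rho>)" unfolding \<psi>0_def MM ..
    also have "\<dots> = \<rho> + of_int n * L - (1 - r) * (of_int n * (L - l) + Mf L l \<rho>)" using wdec by simp
    also have "\<dots> = \<psi>0 \<rho> + of_int n * (L - (1 - r) * (L - l))" unfolding \<psi>0_def by (simp add: algebra_simps)
    also have "\<dots> = \<psi>0 \<rho> + of_int n * L'" using key by simp
    finally have \<psi>w: "\<psi>0 w = \<psi>0 \<rho> + of_int n * L'" .
    have "req L' (\<psi>0 w) (\<psi>0 \<rho>)" unfolding \<psi>w using req_mult .
    then have "req L' (b + \<epsilon>' * \<psi>0 w) (b + \<epsilon>' * \<psi>0 \<rho>)" using req_affine[OF _ \<epsilon>'(1)] by blast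
    then have 2: "rmod L' (b + \<epsilon>' * \<psi>0 w) = rmod L' (b + \<epsilon>' * \<psi>0 \<rho>)" using rmod_req_eq[OF L'(1)] by blast
    show "\<pi> (rmod L (a + \<epsilon> * w)) = rmod L' (b + \<epsilon>' * \<psi>0 w)" unfolding 1 2 using can0[OF \<rho>] .
  qed
  show ?thesis using \<epsilon>(1) \<epsilon>'(1) mono0 lip0 per0 can by blast
qed

lemma ts_basic:
  assumes ts: "tightening_seq L caseA pc l \<iota> \<phi> \<pi>"
  shows "0 < L i" "L (Suc i) \<le> L i" "\<forall>x\<in>{0..<L i}. \<pi> i x \<in> {0..<L (Suc i)}"
proof -
  have t: "0 < L i \<and> (caseA i \<longrightarrow> L (Suc i) < L i) \<and> (\<not> caseA i \<longrightarrow> L (Suc i) = L i) \<and>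
      \<pi> i ` circ_pts (L i) \<subseteq> circ_pts (L (Suc i))"
    using ts unfolding tightening_seq_def by blast
  then show "0 < L i" "L (Suc i) \<le> L i" by (cases "caseA i"; auto)+
  show "\<forall>x\<in>{0..<L i}. \<pi> i x \<in> {0..<L (Suc i)}" using t unfolding circ_pts_def by blast
qed

lemma ts_Lle: assumes ts: "tightening_seq L caseA pc l \<iota> \<phi> \<pi>" shows "L i \<le> L 0"
proof (induction i)
  case (Suc i) then show ?case using ts_basic(2)[OF ts, of i] by simp
qed simp

lemma ts_caseb:
  assumes ts: "tightening_seq L caseA pc l \<iota> \<phi> \<pi>" and nb: "\<not> caseA i"
  shows "\<forall>x\<in>{0..<L i}. \<pi> i x = x" "L (Suc i) = L i"
    "\<forall>x\<in>{0..<L i}. \<iota> i x = x \<and> \<phi> i x = x" "pc i" "l i = L i"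
proof -
  have t: "pc i \<and> l i = L i \<and> L (Suc i) = L i \<and> (\<forall>t\<in>circ_pts (L i). \<iota> i t = t \<and> \<phi> i t = t)"
    "\<forall>t\<in>pdom (pc i) (l i). \<pi> i (\<iota> i t) = \<phi> i t"
    using ts nb unfolding tightening_seq_def by blast+
  then have pd: "pdom (pc i) (l i) = {0..<L i}" unfolding pdom_def by simp
  show "\<forall>x\<in>{0..<L i}. \<pi> i x = x" using t pd unfolding circ_pts_def by metis
  show "L (Suc i) = L i" "pc i" "l i = L i" using t by auto
  show "\<forall>x\<in>{0..<L i}. \<iota> i x = x \<and> \<phi> i x = x" using t unfolding circ_pts_def by blast
qed

lemma ts_casea_data:
  assumes ts: "tightening_seq L caseA pc l \<iota> \<phi> \<pi>" and a: "caseA i"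
  shows "unit_speed_path (pc i) (l i) (L i) (\<iota> i)" "unit_speed_path (pc i) (l i) (L (Suc i)) (\<phi> i)"
    "inj_on (\<iota> i) (pint (pc i) (l i))" "inj_on (\<phi> i) (pint (pc i) (l i))"
    "L 0 / 2 \<le> l i" "L (Suc i) < L i"
    "\<forall>t\<in>pdom (pc i) (l i). \<pi> i (\<iota> i t) = \<phi> i t"
    "\<pi> i ` Qset True (L i) (pc i) (l i) (\<iota> i) = Qset True (L (Suc i)) (pc i) (l i) (\<phi> i)"
    "\<forall>x\<in>Qset True (L i) (pc i) (l i) (\<iota> i). \<forall>y\<in>Qset True (L i) (pc i) (l i) (\<iota> i).
        circ_dist (L (Suc i)) (\<pi> i x) (\<pi> i y) =
        measure lborel (Qset True (L (Suc i)) (pc i) (l i) (\<phi> i)) /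
        measure lborel (Qset True (L i) (pc i) (l i) (\<iota> i)) * circ_dist (L i) x y"
  using ts a unfolding tightening_seq_def Let_def by blast+

lemma ts_casea_pc:
  assumes ts: "tightening_seq L caseA pc l \<iota> \<phi> \<pi>" and a: "caseA i"
  shows "\<not> pc i"
proof
  assume p: "pc i"
  note d = ts_casea_data[OF ts a]
  have L0: "0 < L 0" using ts_basic(1)[OF ts] .
  have lp: "0 < l i" using d(5) L0 by simp
  have "l i = L i" using usp_circle[OF ts_basic(1)[OF ts] lp] d(1) d(3) p unfolding pint_def by simp
  moreover have "l i = L (Suc i)" using usp_circle[OF ts_basic(1)[OF ts] lp] d(2) d(4) p unfolding pint_def by simp
  ultimately show False using d(6) by simp
qed

lemma ts_step:
  assumes ts: "tightening_seq L caseA pc l \<iota> \<phi> \<pi>" and s: "s = 1 \<or> s = -1"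
  shows "\<exists>\<psi> c' s'. (s' = 1 \<or> s' = -1) \<and> (\<forall>u v. u \<le> v \<longrightarrow> \<psi> u \<le> \<psi> v) \<and>
     (\<forall>u v. u \<le> v \<longrightarrow> \<psi> v - \<psi> u \<le> v - u) \<and> (\<forall>u. \<psi> (u + L i) = \<psi> u + L (Suc i)) \<and>
     (\<forall>u. \<pi> i (rmod (L i) (c + s * u)) = rmod (L (Suc i)) (c' + s' * \<psi> u))"
proof (cases "caseA i")
  case False
  note b = ts_caseb[OF ts False]
  have "\<pi> i (rmod (L i) (c + s * u)) = rmod (L (Suc i)) (c + s * u)" for u
    using b(1) b(2) rmod_range[OF ts_basic(1)[OF ts, of i]] by simp
  then show ?thesis using s b(2) by (intro exI[of _ "\<lambda>u. u"] exI[of _ c] exI[of _ s]) auto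
next
  case True
  note d = ts_casea_data[OF ts True]
  have np: "\<not> pc i" using ts_casea_pc[OF ts True] .
  have L: "0 < L i" "0 < L (Suc i)" using ts_basic(1)[OF ts] by auto
  have lp: "0 < l i" using d(5) ts_basic(1)[OF ts, of 0] by simp
  have l2: "L i \<le> 2 * l i" using d(5) ts_Lle[OF ts, of i] by simp
  have pr: "\<forall>x\<in>{0..<L i}. \<pi> i x \<in> {0..<L (Suc i)}" using ts_basic(3)[OF ts] .
  have pd: "pdom (pc i) (l i) = {0..l i}" "pint (pc i) (l i) = {0<..<l i}" using np unfolding pdom_def pint_def by auto
  have Qd: "Qset True (L i) (pc i) (l i) (\<iota> i) = {0..<L i} - \<iota> i ` {0<..<l i}"
    unfolding Qset_def circ_pts_def pd by simp
  have u1: "unit_speed_path False (l i) (L i) (\<iota> i)" using d(1) np by simp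
  have u2: "unit_speed_path False (l i) (L (Suc i)) (\<phi> i)" using d(2) np by simp
  have inj1: "inj_on (\<iota> i) {0<..<l i}" and inj2: "inj_on (\<phi> i) {0<..<l i}" using d(3,4) pd by auto
  have pi': "\<forall>t\<in>{0..l i}. \<pi> i (\<iota> i t) = \<phi> i t" using d(7) pd by auto
  have "\<exists>a \<epsilon> b \<epsilon>' \<psi>0. (\<epsilon> = 1 \<or> \<epsilon> = -1) \<and> (\<epsilon>' = 1 \<or> \<epsilon>' = -1) \<and>
     (\<forall>u v. u \<le> v \<longrightarrow> \<psi>0 u \<le> \<psi>0 v) \<and> (\<forall>u v. u \<le> v \<longrightarrow> \<psi>0 v - \<psi>0 u \<le> v - u) \<and>
     (\<forall>u. \<psi>0 (u + L i) = \<psi>0 u + L (Suc i)) \<and> (\<forall>w. \<pi> i (rmod (L i) (a + \<epsilon> * w)) = rmod (L (Suc i)) (b + \<epsilon>' * \<psi>0 w))"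
    by (rule step_canon[OF L(1) L(2) d(6) lp l2 u1 inj1 u2 inj2 pr pi' d(9) Qd])
  then obtain a \<epsilon> b \<epsilon>' \<psi>0 where c: "(\<epsilon> = 1 \<or> \<epsilon> = -1)" "(\<epsilon>' = 1 \<or> \<epsilon>' = -1)"
     "(\<forall>u v. u \<le> v \<longrightarrow> \<psi>0 u \<le> \<psi>0 v)" "(\<forall>u v. u \<le> v \<longrightarrow> \<psi>0 v - \<psi>0 u \<le> v - u)"
     "(\<forall>u. \<psi>0 (u + L i) = \<psi>0 u + L (Suc i))" "(\<forall>w. \<pi> i (rmod (L i) (a + \<epsilon> * w)) = rmod (L (Suc i)) (b + \<epsilon>' * \<psi>0 w))"
    by blast
  show ?thesis using reparam[OF L c(1,2,3,4,5,6) s] .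
qed

definition linv :: "(nat \<Rightarrow> real) \<Rightarrow> (nat \<Rightarrow> real \<Rightarrow> real) \<Rightarrow> nat \<Rightarrow> (real \<Rightarrow> real) \<times> real \<times> real \<Rightarrow> bool" where
  "linv L \<pi> i p \<longleftrightarrow> (fst p 0 = 0 \<and> fst p (L 0) = L i \<and>
     (\<forall>x y. 0 \<le> x \<longrightarrow> x \<le> y \<longrightarrow> y \<le> L 0 \<longrightarrow> fst p x \<le> fst p y \<and> fst p y - fst p x \<le> y - x) \<and>
     (snd (snd p) = 1 \<or> snd (snd p) = -1) \<and>
     (\<forall>x\<in>{0..<L 0}. picomp \<pi> i x = rmod (L i) (fst (snd p) + snd (snd p) * fst p x)))"

lemma lift_seq:
  assumes ts: "tightening_seq L caseA pc l \<iota> \<phi> \<pi>"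
  shows "\<exists>f. \<forall>i. linv L \<pi> i (f i) \<and> (\<forall>x\<in>{0..L 0}. fst (f (Suc i)) x \<le> fst (f i) x)"
proof -
  have L0: "0 < L 0" using ts_basic(1)[OF ts] .
  have base: "\<exists>p. linv L \<pi> 0 p"
  proof -
    have "\<forall>x\<in>{0..<L 0}. x = rmod (L 0) (0 + 1 * x)" using rmod_eq_iff[OF L0 _ req_refl] by simp
    then have "linv L \<pi> 0 (\<lambda>x. x, 0, 1)" unfolding linv_def by auto
    then show ?thesis by blast
  qed
  have step: "\<exists>q. linv L \<pi> (Suc n) q \<and> (\<forall>x\<in>{0..L 0}. fst q x \<le> fst p x)" if P: "linv L \<pi> n p" for p n
  proof -
    obtain G c s where p: "p = (G, c, s)" by (cases p) auto
    have G0: "G 0 = 0" and GL: "G (L 0) = L n"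
      and Gm: "\<forall>x y. 0 \<le> x \<longrightarrow> x \<le> y \<longrightarrow> y \<le> L 0 \<longrightarrow> G x \<le> G y \<and> G y - G x \<le> y - x"
      and s: "s = 1 \<or> s = -1"
      and Gf: "\<forall>x\<in>{0..<L 0}. picomp \<pi> n x = rmod (L n) (c + s * G x)"
      using P unfolding linv_def p by auto
    obtain \<psi> c' s' where st: "s' = 1 \<or> s' = -1" "\<forall>u v. u \<le> v \<longrightarrow> \<psi> u \<le> \<psi> v"
      "\<forall>u v. u \<le> v \<longrightarrow> \<psi> v - \<psi> u \<le> v - u" "\<forall>u. \<psi> (u + L n) = \<psi> u + L (Suc n)"
      "\<forall>u. \<pi> n (rmod (L n) (c + s * u)) = rmod (L (Suc n)) (c' + s' * \<psi> u)"
      using ts_step[OF ts s, of n c] by blast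
    define G' where "G' x = \<psi> (G x) - \<psi> 0" for x
    have "linv L \<pi> (Suc n) (G', c' + s' * \<psi> 0, s')"
      unfolding linv_def fst_conv snd_conv
    proof (intro conjI)
      show "G' 0 = 0" unfolding G'_def G0 by simp
      show "G' (L 0) = L (Suc n)" unfolding G'_def GL using st(4)[rule_format, of 0] by simp
      show "s' = 1 \<or> s' = -1" by (rule st(1))
      show "\<forall>x y. 0 \<le> x \<longrightarrow> x \<le> y \<longrightarrow> y \<le> L 0 \<longrightarrow> G' x \<le> G' y \<and> G' y - G' x \<le> y - x"
      proof (intro allI impI)
        fix x y :: real assume xy: "0 \<le> x" "x \<le> y" "y \<le> L 0"
        then have g: "G x \<le> G y" "G y - G x \<le> y - x" using Gm by auto
        then have "\<psi> (G x) \<le> \<psi> (G y)" "\<psi> (G y) - \<psi> (G x) \<le> G y - G x" using st(2,3) by auto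
        then show "G' x \<le> G' y \<and> G' y - G' x \<le> y - x" unfolding G'_def using g by auto
      qed
      show "\<forall>x\<in>{0..<L 0}. picomp \<pi> (Suc n) x = rmod (L (Suc n)) (c' + s' * \<psi> 0 + s' * G' x)"
      proof
        fix x assume x: "x \<in> {0..<L 0}"
        have "picomp \<pi> (Suc n) x = \<pi> n (rmod (L n) (c + s * G x))" using Gf x by simp
        also have "\<dots> = rmod (L (Suc n)) (c' + s' * \<psi> (G x))" using st(5) by blast
        also have "c' + s' * \<psi> (G x) = c' + s' * \<psi> 0 + s' * G' x" unfolding G'_def by (simp add: algebra_simps)
        finally show "picomp \<pi> (Suc n) x = rmod (L (Suc n)) (c' + s' * \<psi> 0 + s' * G' x)" .
      qed
    qed
    moreover have "\<forall>x\<in>{0..L 0}. G' x \<le> G x"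
    proof
      fix x assume x: "x \<in> {0..L 0}"
      have "G x - G 0 \<le> x - 0 \<and> G 0 \<le> G x" using Gm x by auto
      then have "G 0 \<le> G x" by simp
      then have "\<psi> (G x) - \<psi> (G 0) \<le> G x - G 0" using st(3) by blast
      then show "G' x \<le> G x" unfolding G'_def using G0 by simp
    qed
    ultimately show ?thesis unfolding p by (intro exI[of _ "(G', c' + s' * \<psi> 0, s')"]) simp
  qed
  show ?thesis
    using dependent_nat_choice[of "\<lambda>n p. linv L \<pi> n p" "\<lambda>n p q. \<forall>x\<in>{0..L 0}. fst q x \<le> fst p x"] base step
    by blast
qed

lemma img_shift:
  assumes L: "0 < L" and a: "0 \<le> a" "a < L" and l: "0 < l" "l < L"
  shows "(\<lambda>s. rmod L (a + s)) ` {0<..<l} = {a<..<min (a+l) L} \<union> {0..<a+l-L}"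
proof
  show "(\<lambda>s. rmod L (a + s)) ` {0<..<l} \<subseteq> {a<..<min (a+l) L} \<union> {0..<a+l-L}"
  proof
    fix x assume "x \<in> (\<lambda>s. rmod L (a + s)) ` {0<..<l}"
    then obtain s where s: "s \<in> {0<..<l}" "x = rmod L (a + s)" by blast
    show "x \<in> {a<..<min (a+l) L} \<union> {0..<a+l-L}"
    proof (cases "a + s < L")
      case True
      then have "a + s \<in> {0..<L}" using s a by auto
      then have "x = a + s" using s rmod_eq_iff[OF L _ req_refl, of "a + s"] by simp
      then show ?thesis using s True by auto
    next
      case False
      have "req L (a + s) (a + s + of_int (-1) * L)" using req_sym[OF req_mult[of L "a + s" "-1"]] .
      moreover have "a + s + of_int (-1) * L \<in> {0..<L}" using False s a l by auto
      ultimately have "rmod L (a + s) = a + s + of_int (-1) * L" using rmod_eq_iff[OF L] by blast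
      then have "x = a + s - L" using s by simp
      then show ?thesis using s False a by auto
    qed
  qed
next
  show "{a<..<min (a+l) L} \<union> {0..<a+l-L} \<subseteq> (\<lambda>s. rmod L (a + s)) ` {0<..<l}"
  proof
    fix x assume x: "x \<in> {a<..<min (a+l) L} \<union> {0..<a+l-L}"
    then show "x \<in> (\<lambda>s. rmod L (a + s)) ` {0<..<l}"
    proof
      assume x: "x \<in> {a<..<min (a+l) L}"
      have "x \<in> {0..<L}" using x a by auto
      then have "rmod L (a + (x - a)) = x" using rmod_eq_iff[OF L _ req_refl, of x] by simp
      then have e: "x = (\<lambda>s. rmod L (a + s)) (x - a)" by simp
      have "x - a \<in> {0<..<l}" using x by auto
      with e show ?thesis by (rule image_eqI)
    next
      assume x: "x \<in> {0..<a+l-L}"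
      have "req L (a + (x + L - a)) x" using req_mult[of L x 1] by simp
      moreover have "x \<in> {0..<L}" using x l a by auto
      ultimately have "rmod L (a + (x + L - a)) = x" using rmod_eq_iff[OF L] by blast
      then have e: "x = (\<lambda>s. rmod L (a + s)) (x + L - a)" by simp
      have "x + L - a \<in> {0<..<l}" using x a by auto
      with e show ?thesis by (rule image_eqI)
    qed
  qed
qed

lemma Q_measure:
  assumes L: "0 < L" and l: "0 < l" "l < L" and \<epsilon>: "\<epsilon> = 1 \<or> \<epsilon> = -1"
    and form: "\<forall>t\<in>{0<..<l}. \<iota> t = rmod L (a + \<epsilon> * t)"
  shows "L - l \<le> measure lborel ({0..<L} - \<iota> ` {0<..<l})"
proof -
  define a' where "a' = (if \<epsilon> = 1 then a else a - l)"
  define b where "b = rmod L a'"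
  have b: "0 \<le> b" "b < L" using rmod_range[OF L] unfolding b_def by auto
  have g: "\<forall>t\<in>{0<..<l}. \<iota> t = rmod L (b + (if \<epsilon> = 1 then t else l - t))"
  proof
    fix t assume t: "t \<in> {0<..<l}"
    have "req L (b + (if \<epsilon> = 1 then t else l - t)) (a' + (if \<epsilon> = 1 then t else l - t))"
      using req_add[OF req_rmod] unfolding b_def by blast
    moreover have "a' + (if \<epsilon> = 1 then t else l - t) = a + \<epsilon> * t" unfolding a'_def using \<epsilon> by auto
    ultimately show "\<iota> t = rmod L (b + (if \<epsilon> = 1 then t else l - t))"
      using form t rmod_req_eq[OF L] by metis
  qed
  have img: "\<iota> ` {0<..<l} = (\<lambda>s. rmod L (b + s)) ` {0<..<l}"
  proof (cases "\<epsilon> = 1")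
    case True
    then show ?thesis using g by (auto intro!: image_cong)
  next
    case False
    show ?thesis
    proof
      show "\<iota> ` {0<..<l} \<subseteq> (\<lambda>s. rmod L (b + s)) ` {0<..<l}"
      proof
        fix x assume "x \<in> \<iota> ` {0<..<l}"
        then obtain t where t: "t \<in> {0<..<l}" "x = \<iota> t" by blast
        then have "x = rmod L (b + (l - t))" using g False by auto
        moreover have "l - t \<in> {0<..<l}" using t by auto
        ultimately show "x \<in> (\<lambda>s. rmod L (b + s)) ` {0<..<l}" by blast
      qed
      show "(\<lambda>s. rmod L (b + s)) ` {0<..<l} \<subseteq> \<iota> ` {0<..<l}"
      proof
        fix x assume "x \<in> (\<lambda>s. rmod L (b + s)) ` {0<..<l}"
        then obtain s where s: "s \<in> {0<..<l}" "x = rmod L (b + s)" by blast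
        then have "l - s \<in> {0<..<l}" by auto
        moreover have "\<iota> (l - s) = x" using g s False \<open>l - s \<in> {0<..<l}\<close> by auto
        ultimately show "x \<in> \<iota> ` {0<..<l}" by blast
      qed
    qed
  qed
  define A1 where "A1 = {b<..<min (b+l) L}"
  define A2 where "A2 = {0..<b+l-L}"
  have I: "\<iota> ` {0<..<l} = A1 \<union> A2" unfolding img A1_def A2_def using img_shift[OF L b l] .
  have sub: "A1 \<union> A2 \<subseteq> {0..<L}" unfolding A1_def A2_def using b l by auto
  have meas: "A1 \<in> sets lborel" "A2 \<in> sets lborel" "{0..<L} \<in> sets lborel" unfolding A1_def A2_def by auto
  have "measure lborel ({0..<L} - (A1 \<union> A2)) = measure lborel {0..<L} - measure lborel (A1 \<union> A2)"
    by (rule measure_Diff) (use L meas sub in auto)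
  moreover have "measure lborel (A1 \<union> A2) \<le> measure lborel A1 + measure lborel A2"
    by (rule measure_Un_le) (use meas in auto)
  moreover have m1: "measure lborel A1 = min (b+l) L - b" unfolding A1_def using b l by simp
  moreover have m2: "measure lborel A2 \<le> max 0 (b+l-L)"
  proof (cases "0 \<le> b+l-L")
    case True then show ?thesis unfolding A2_def by simp
  next
    case False then have "A2 = {}" unfolding A2_def by auto
    then show ?thesis by simp
  qed
  moreover have "min (b+l) L - b + max 0 (b+l-L) = l" by (auto simp: min_def max_def)
  ultimately show ?thesis unfolding I using L by simp
qed

lemma Qlen_bound:
  assumes ts: "tightening_seq L caseA pc l \<iota> \<phi> \<pi>"
  shows "L i - L (Suc i) \<le> Qlen L caseA pc l \<iota> i"
proof (cases "caseA i")
  case False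
  then show ?thesis using ts_caseb(2)[OF ts False] unfolding Qlen_def Qset_def by simp
next
  case True
  note d = ts_casea_data[OF ts True]
  have np: "\<not> pc i" using ts_casea_pc[OF ts True] .
  have L: "0 < L i" "0 < L (Suc i)" using ts_basic(1)[OF ts] by auto
  have lp: "0 < l i" using d(5) ts_basic(1)[OF ts, of 0] by simp
  have u1: "unit_speed_path False (l i) (L i) (\<iota> i)" using d(1) np by simp
  have u2: "unit_speed_path False (l i) (L (Suc i)) (\<phi> i)" using d(2) np by simp
  have inj1: "inj_on (\<iota> i) {0<..<l i}" and inj2: "inj_on (\<phi> i) {0<..<l i}" using d(3,4) np unfolding pint_def by auto
  obtain \<epsilon> where \<epsilon>: "\<epsilon> = 1 \<or> \<epsilon> = -1" "\<forall>t\<in>{0..l i}. \<iota> i t = rmod (L i) (\<iota> i 0 + \<epsilon> * t)"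
    using usp_form[OF L(1) lp u1 inj1] by blast
  obtain \<epsilon>' where \<epsilon>': "\<epsilon>' = 1 \<or> \<epsilon>' = -1" "\<forall>t\<in>{0..l i}. \<phi> i t = rmod (L (Suc i)) (\<phi> i 0 + \<epsilon>' * t)"
    using usp_form[OF L(2) lp u2 inj2] by blast
  have lL': "l i \<le> L (Suc i)" using usp_len[OF L(2) lp \<epsilon>'(1) \<epsilon>'(2) inj2] .
  have lL: "l i < L i" using lL' d(6) by simp
  have "\<forall>t\<in>{0<..<l i}. \<iota> i t = rmod (L i) (\<iota> i 0 + \<epsilon> * t)"
  proof
    fix t assume "t \<in> {0<..<l i}"
    then have "t \<in> {0..l i}" by auto
    then show "\<iota> i t = rmod (L i) (\<iota> i 0 + \<epsilon> * t)" using \<epsilon>(2) by blast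
  qed
  then have "L i - l i \<le> measure lborel ({0..<L i} - \<iota> i ` {0<..<l i})"
    using Q_measure[OF L(1) lp lL \<epsilon>(1)] by blast
  moreover have "Qlen L caseA pc l \<iota> i = measure lborel ({0..<L i} - \<iota> i ` {0<..<l i})"
    unfolding Qlen_def Qset_def circ_pts_def pint_def using True np by simp
  ultimately show ?thesis using lL' by simp
qed

lemma picomp_range:
  assumes ts: "tightening_seq L caseA pc l \<iota> \<phi> \<pi>" and x: "x \<in> {0..<L 0}"
  shows "picomp \<pi> i x \<in> {0..<L i}"
proof (induction i)
  case 0 then show ?case using x by simp
next
  case (Suc i) then show ?case using ts_basic(3)[OF ts, of i] by simp
qed

lemma alpha_eventually:
  assumes ts: "tightening_seq L caseA pc l \<iota> \<phi> \<pi>"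
    and tsa: "\<forall>i. (\<forall>t\<in>pdom (pc i) (l i). \<alpha>s i (\<iota> i t) = \<alpha>s (Suc i) (\<phi> i t))"
    and cdj: "completely_disjoint L caseA pc l \<iota> \<pi>"
    and x: "x \<in> {0..<L 0}"
  shows "\<exists>N. \<forall>i\<ge>N. \<alpha>s i (picomp \<pi> i x) = \<alpha>s N (picomp \<pi> N x)"
proof -
  define z where "z i = picomp \<pi> i x" for i
  define Q where "Q i = Qset (caseA i) (L i) (pc i) (l i) (\<iota> i)" for i
  define P where "P i = P0 L pc l \<iota> \<pi> i" for i
  have zr: "z i \<in> {0..<L i}" for i unfolding z_def using picomp_range[OF ts x] .
  have zs: "z (Suc i) = \<pi> i (z i)" for i unfolding z_def by simp
  have QP: "Q i \<subseteq> P i" for i using cdj unfolding completely_disjoint_def Q_def P_def by blast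
  have Ps: "P (Suc i) = \<pi> i ` (P i \<inter> \<iota> i ` pint (pc i) (l i))" for i unfolding P_def by simp
  have pintdom: "pint c ll \<subseteq> pdom c ll" for c ll unfolding pint_def pdom_def by auto
  have K1: "\<alpha>s (Suc i) (z (Suc i)) = \<alpha>s i (z i)" if nq: "z i \<notin> Q i" for i
  proof (cases "caseA i")
    case False
    note b = ts_caseb[OF ts False]
    have "z (Suc i) = z i" using zs b(1) zr by simp
    moreover have "z i \<in> pdom (pc i) (l i)" using zr b(4,5) unfolding pdom_def by simp
    then have "\<alpha>s i (\<iota> i (z i)) = \<alpha>s (Suc i) (\<phi> i (z i))" using tsa by blast
    ultimately show ?thesis using b(3) zr by simp
  next
    case True
    note d = ts_casea_data[OF ts True]
    have "z i \<in> \<iota> i ` pint (pc i) (l i)" using nq zr[of i] True unfolding Q_def Qset_def circ_pts_def by auto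
    then obtain t where t: "t \<in> pint (pc i) (l i)" "z i = \<iota> i t" by blast
    have td: "t \<in> pdom (pc i) (l i)" using t pintdom by blast
    have "z (Suc i) = \<phi> i t" using zs t d(7) td by simp
    then show ?thesis using tsa td t by simp
  qed
  have K2a: "z (Suc i) \<notin> P (Suc i)" if q: "z i \<in> Q i" for i
  proof
    assume zp: "z (Suc i) \<in> P (Suc i)"
    have a: "caseA i" using q unfolding Q_def Qset_def by (cases "caseA i") auto
    note d = ts_casea_data[OF ts a]
    obtain w where w: "w \<in> P i" "w \<in> \<iota> i ` pint (pc i) (l i)" "z (Suc i) = \<pi> i w" using zp Ps by blast
    obtain t where t: "t \<in> pint (pc i) (l i)" "w = \<iota> i t" using w by blast
    have "z (Suc i) = \<phi> i t" using w t d(7) pintdom by auto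
    moreover have "z (Suc i) \<in> Qset True (L (Suc i)) (pc i) (l i) (\<phi> i)"
      using d(8) q a zs unfolding Q_def by (metis imageI)
    ultimately show False using t unfolding Qset_def by auto
  qed
  have K2b: "z (Suc k) \<notin> P (Suc k)" if np: "z k \<notin> P k" for k
  proof
    assume zp: "z (Suc k) \<in> P (Suc k)"
    obtain w where w: "w \<in> P k" "w \<in> \<iota> k ` pint (pc k) (l k)" "z (Suc k) = \<pi> k w" using zp Ps by blast
    obtain t where t: "t \<in> pint (pc k) (l k)" "w = \<iota> k t" using w by blast
    show False
    proof (cases "caseA k")
      case False
      note b = ts_caseb[OF ts False]
      have tr: "t \<in> {0..<L k}" using t b(4,5) unfolding pint_def by simp
      then have "w = t" using t b(3) by simp
      then have "z (Suc k) = w" using w b(1) tr by simp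
      moreover have "z (Suc k) = z k" using zs b(1) zr by simp
      ultimately show False using w np by simp
    next
      case True
      note d = ts_casea_data[OF ts True]
      have "z k \<notin> Q k" using np QP by blast
      then have "z k \<in> \<iota> k ` pint (pc k) (l k)" using zr[of k] True unfolding Q_def Qset_def circ_pts_def by auto
      then obtain t' where t': "t' \<in> pint (pc k) (l k)" "z k = \<iota> k t'" by blast
      have "\<phi> k t' = \<phi> k t" using zs w t t' d(7) pintdom by (metis subsetD)
      then have "t' = t" using d(4) t t' by (meson inj_onD)
      then show False using t t' w np by simp
    qed
  qed
  show ?thesis
  proof (cases "\<exists>i. z i \<in> Q i")
    case False
    have "\<alpha>s i (z i) = \<alpha>s 0 (z 0)" for i
    proof (induction i)
      case (Suc i) then show ?case using K1 False by metis
    qed simp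
    then show ?thesis unfolding z_def by blast
  next
    case True
    then obtain i0 where i0: "z i0 \<in> Q i0" by blast
    have np: "z (Suc i0 + d) \<notin> P (Suc i0 + d)" for d
    proof (induction d)
      case 0 then show ?case using K2a[OF i0] by simp
    next
      case (Suc d) then show ?case using K2b by simp
    qed
    have "\<alpha>s (Suc i0 + d) (z (Suc i0 + d)) = \<alpha>s (Suc i0) (z (Suc i0))" for d
    proof (induction d)
      case (Suc d)
      have "z (Suc i0 + d) \<notin> Q (Suc i0 + d)" using np QP by blast
      then show ?case using K1 Suc by simp
    qed simp
    then have "\<forall>i\<ge>Suc i0. \<alpha>s i (z i) = \<alpha>s (Suc i0) (z (Suc i0))"
      by (metis le_add_diff_inverse)
    then show ?thesis unfolding z_def by blast
  qed
qed

lemma dZ_cont: "isCont dZ x"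
proof -
  have "continuous_on UNIV dZ"
    unfolding continuous_on_iff
  proof (intro ballI allI impI)
    fix x' :: real and e :: real assume "e > 0"
    then show "\<exists>d>0. \<forall>y\<in>UNIV. dist y x' < d \<longrightarrow> dist (dZ y) (dZ x') < e"
      using dZ_lip by (intro exI[of _ e]) (auto simp: dist_real_def intro: le_less_trans)
  qed
  then show ?thesis using continuous_on_eq_continuous_at[OF open_UNIV] by blast
qed

lemma cd_tendsto:
  assumes Ls: "Ls \<longlonglongrightarrow> Li" and Li: "0 < Li" and pos: "\<forall>i. 0 < Ls i"
    and a: "a \<longlonglongrightarrow> A" and b: "b \<longlonglongrightarrow> B"
  shows "(\<lambda>i. circ_dist (Ls i) (a i) (b i)) \<longlonglongrightarrow> circ_dist Li A B"
proof -
  have "(\<lambda>i. Ls i * dZ ((a i - b i) / Ls i)) \<longlonglongrightarrow> Li * dZ ((A - B) / Li)"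
    by (intro tendsto_mult Ls isCont_tendsto_compose[OF dZ_cont] tendsto_divide tendsto_diff a b) (use Li in auto)
  moreover have "circ_dist (Ls i) (a i) (b i) = Ls i * dZ ((a i - b i) / Ls i)" for i using circ_dist_dZ pos by blast
  moreover have "circ_dist Li A B = Li * dZ ((A - B) / Li)" using circ_dist_dZ Li by blast
  ultimately show ?thesis by simp
qed

lemma lip_cont: assumes "\<forall>x\<in>S. \<forall>y\<in>S. \<bar>g y - g x\<bar> \<le> \<bar>y - x\<bar>" shows "continuous_on S (g :: real \<Rightarrow> real)"
  unfolding continuous_on_iff
proof (intro ballI allI impI)
  fix x e :: real assume x: "x \<in> S" and "e > 0"
  then show "\<exists>d>0. \<forall>y\<in>S. dist y x < d \<longrightarrow> dist (g y) (g x) < e"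
    using assms x by (intro exI[of _ e]) (auto simp: dist_real_def intro: le_less_trans)
qed

theorem lemma4p3:
  fixes R :: real and \<alpha> :: "real \<Rightarrow> 'a::metric_space"
    and L :: "nat \<Rightarrow> real" and caseA pc :: "nat \<Rightarrow> bool" and l :: "nat \<Rightarrow> real"
    and \<iota> \<phi> \<pi> :: "nat \<Rightarrow> real \<Rightarrow> real" and \<alpha>s :: "nat \<Rightarrow> real \<Rightarrow> 'a"
    and \<sigma> :: "real set \<Rightarrow> real"
  assumes "0 \<le> R"
    and "rough_geodesic R (UNIV :: 'a set)"
    and "rcircle R (L 0) \<alpha>"
    and "tightening_seq_for R \<alpha> L caseA pc l \<iota> \<phi> \<pi> \<alpha>s"
    and "completely_disjoint L caseA pc l \<iota> \<pi>"
    and "summable (Qlen L caseA pc l \<iota>)" and "(\<Sum>i. Qlen L caseA pc l \<iota> i) < L 0"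
    and "\<forall>c\<in>Sinf L \<pi>. \<sigma> c \<in> c"
  shows "(\<forall>c\<in>Sinf L \<pi>. convergent (\<lambda>i. \<alpha>s i (picomp \<pi> i (\<sigma> c)))) \<and>
         (\<exists>Linf h. bij_betw h (Sinf L \<pi>) (circ_pts Linf) \<and>
            (\<forall>c\<in>Sinf L \<pi>. \<forall>c'\<in>Sinf L \<pi>.
                circ_dist Linf (h c) (h c') = tdelta L \<pi> (\<sigma> c) (\<sigma> c')) \<and>
            rcircle R Linf
              ((\<lambda>c. lim (\<lambda>i. \<alpha>s i (picomp \<pi> i (\<sigma> c)))) \<circ> inv_into (Sinf L \<pi>) h))"
proof -
  have ts: "tightening_seq L caseA pc l \<iota> \<phi> \<pi>" using assms(4) unfolding tightening_seq_for_def by blast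
  have tsa: "\<forall>i. (\<forall>t\<in>pdom (pc i) (l i). \<alpha>s i (\<iota> i t) = \<alpha>s (Suc i) (\<phi> i t))"
    using assms(4) unfolding tightening_seq_for_def by blast
  have rc: "rcircle R (L i) (\<alpha>s i)" for i using assms(4) unfolding tightening_seq_for_def by blast
  have L0: "0 < L 0" using ts_basic(1)[OF ts] .
  have Lpos: "\<forall>i. 0 < L i" using ts_basic(1)[OF ts] by blast
  define z where "z i x = picomp \<pi> i x" for i x
  define cls where "cls x = {y\<in>circ_pts (L 0). tdelta L \<pi> x y = 0}" for x
  have Sd: "Sinf L \<pi> = cls ` {0..<L 0}" unfolding Sinf_def cls_def circ_pts_def by simp
  have clsub: "cls x \<subseteq> {0..<L 0}" for x unfolding cls_def circ_pts_def by blast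
  have \<sigma>S: "\<sigma> c \<in> {0..<L 0}" if c: "c \<in> Sinf L \<pi>" for c
  proof -
    have "\<sigma> c \<in> c" using assms(8) c by blast
    moreover obtain x where "c = cls x" using c unfolding Sd by blast
    ultimately show ?thesis using clsub by blast
  qed
  have conv: "convergent (\<lambda>i. \<alpha>s i (z i x))" if x: "x \<in> {0..<L 0}" for x
  proof -
    obtain N where N: "\<forall>i\<ge>N. \<alpha>s i (picomp \<pi> i x) = \<alpha>s N (picomp \<pi> N x)"
      using alpha_eventually[OF ts tsa assms(5) x] by blast
    have "eventually (\<lambda>i. \<alpha>s i (z i x) = \<alpha>s N (picomp \<pi> N x)) sequentially"
      unfolding z_def eventually_sequentially using N by blast
    then have "(\<lambda>i. \<alpha>s i (z i x)) \<longlonglongrightarrow> \<alpha>s N (picomp \<pi> N x)" by (rule tendsto_eventually)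
    then show ?thesis unfolding convergent_def by blast
  qed
  have part1: "\<forall>c\<in>Sinf L \<pi>. convergent (\<lambda>i. \<alpha>s i (picomp \<pi> i (\<sigma> c)))"
    using conv \<sigma>S unfolding z_def by blast
  obtain f where f: "\<forall>i. linv L \<pi> i (f i) \<and> (\<forall>x\<in>{0..L 0}. fst (f (Suc i)) x \<le> fst (f i) x)"
    using lift_seq[OF ts] by blast
  define G where "G i = fst (f i)" for i
  define cc where "cc i = fst (snd (f i))" for i
  define ss where "ss i = snd (snd (f i))" for i
  have G0: "G i 0 = 0" and GL: "G i (L 0) = L i"
    and Gm: "\<And>x y. 0 \<le> x \<Longrightarrow> x \<le> y \<Longrightarrow> y \<le> L 0 \<Longrightarrow> G i x \<le> G i y \<and> G i y - G i x \<le> y - x"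
    and ssv: "ss i = 1 \<or> ss i = -1"
    and zf: "\<And>x. x \<in> {0..<L 0} \<Longrightarrow> z i x = rmod (L i) (cc i + ss i * G i x)"
    and Gdec: "\<And>x. x \<in> {0..L 0} \<Longrightarrow> G (Suc i) x \<le> G i x" for i
    using f unfolding linv_def G_def cc_def ss_def z_def by blast+
  have conG: "\<exists>g. (\<lambda>i. G i x) \<longlonglongrightarrow> g" if x: "x \<in> {0..L 0}" for x
  proof -
    have "decseq (\<lambda>i. G i x)" using Gdec[OF x] by (simp add: decseq_Suc_iff)
    moreover have "\<forall>i. 0 \<le> G i x" using Gm[of 0 x] G0 x by auto
    ultimately show ?thesis using decseq_convergent by metis
  qed
  define Gl where "Gl x = lim (\<lambda>i. G i x)" for x
  have Gt: "(\<lambda>i. G i x) \<longlonglongrightarrow> Gl x" if "x \<in> {0..L 0}" for x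
    unfolding Gl_def using conG[OF that] convergent_LIMSEQ_iff convergent_def by blast
  define Linf where "Linf = Gl (L 0)"
  have Lt: "L \<longlonglongrightarrow> Linf" using Gt[of "L 0"] L0 unfolding Linf_def GL by simp
  have Qnn: "0 \<le> Qlen L caseA pc l \<iota> i" for i unfolding Qlen_def by simp
  have Lsum: "L 0 - (\<Sum>k<i. Qlen L caseA pc l \<iota> k) \<le> L i" for i
  proof (induction i)
    case (Suc i) then show ?case using Qlen_bound[OF ts, of i] by simp
  qed simp
  have "L 0 - (\<Sum>k. Qlen L caseA pc l \<iota> k) \<le> L i" for i
    using Lsum[of i] sum_le_suminf[OF assms(6), of "{..<i}"] Qnn by force
  then have "L 0 - (\<Sum>k. Qlen L caseA pc l \<iota> k) \<le> Linf" using LIMSEQ_le_const[OF Lt] by blast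
  then have Linf: "0 < Linf" using assms(7) by simp
  have Gl0: "Gl 0 = 0" using Gt[of 0] L0 G0 LIMSEQ_unique by (simp add: LIMSEQ_const_iff)
  have GlL: "Gl (L 0) = Linf" unfolding Linf_def ..
  have Glm: "Gl x \<le> Gl y \<and> Gl y - Gl x \<le> y - x" if xy: "0 \<le> x" "x \<le> y" "y \<le> L 0" for x y
  proof -
    have tx: "(\<lambda>i. G i x) \<longlonglongrightarrow> Gl x" and ty: "(\<lambda>i. G i y) \<longlonglongrightarrow> Gl y" using Gt xy by auto
    have "Gl x \<le> Gl y" using LIMSEQ_le[OF tx ty] Gm[OF xy] by blast
    moreover have "Gl y - Gl x \<le> y - x"
      using LIMSEQ_le[OF tendsto_diff[OF ty tx] tendsto_const[of "y - x"]] Gm[OF xy] by blast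
    ultimately show ?thesis by blast
  qed
  have Glc: "continuous_on {0..L 0} Gl"
  proof (rule lip_cont, intro ballI)
    fix x y assume "x \<in> {0..L 0}" "y \<in> {0..L 0}"
    then show "\<bar>Gl y - Gl x\<bar> \<le> \<bar>y - x\<bar>" using Glm[of x y] Glm[of y x] by (cases "x \<le> y") auto
  qed
  have td: "tdelta L \<pi> x y = circ_dist Linf (Gl x) (Gl y)" if x: "x \<in> {0..<L 0}" and y: "y \<in> {0..<L 0}" for x y
  proof -
    have e: "circ_dist (L i) (picomp \<pi> i x) (picomp \<pi> i y) = circ_dist (L i) (G i x) (G i y)" for i
      using zf[OF x, of i] zf[OF y, of i] cd_rmod2[OF Lpos[rule_format, of i]] cd_affine[OF ssv[of i]]
      unfolding z_def by simp
    have "(\<lambda>i. circ_dist (L i) (G i x) (G i y)) \<longlonglongrightarrow> circ_dist Linf (Gl x) (Gl y)"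
      using cd_tendsto[OF Lt Linf Lpos Gt Gt] x y by auto
    then show ?thesis unfolding tdelta_def e by (rule limI)
  qed
  have tdreq: "tdelta L \<pi> x y = 0 \<longleftrightarrow> req Linf (Gl x) (Gl y)" if "x \<in> {0..<L 0}" "y \<in> {0..<L 0}" for x y
    using td[OF that] cd_zero_iff[OF Linf] by simp
  have \<sigma>cls: "req Linf (Gl x) (Gl (\<sigma> (cls x)))" if x: "x \<in> {0..<L 0}" for x
  proof -
    have "\<sigma> (cls x) \<in> cls x" using assms(8) Sd x by blast
    then have "\<sigma> (cls x) \<in> {0..<L 0}" "tdelta L \<pi> x (\<sigma> (cls x)) = 0" unfolding cls_def circ_pts_def by auto
    then show ?thesis using tdreq x by blast
  qed
  define h where "h c = rmod Linf (Gl (\<sigma> c))" for c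
  have hd: "circ_dist Linf (h c) (h c') = tdelta L \<pi> (\<sigma> c) (\<sigma> c')" if "c \<in> Sinf L \<pi>" "c' \<in> Sinf L \<pi>" for c c'
    unfolding h_def cd_rmod2[OF Linf] using td \<sigma>S that by simp
  have inj: "inj_on h (Sinf L \<pi>)"
  proof
    fix c c' assume c: "c \<in> Sinf L \<pi>" and c': "c' \<in> Sinf L \<pi>" and e: "h c = h c'"
    obtain x where x: "x \<in> {0..<L 0}" "c = cls x" using c Sd by blast
    obtain x' where x': "x' \<in> {0..<L 0}" "c' = cls x'" using c' Sd by blast
    have "req Linf (Gl (\<sigma> c)) (Gl (\<sigma> c'))" using e unfolding h_def by (rule rmod_eq_req)
    then have r: "req Linf (Gl x) (Gl x')" using \<sigma>cls[OF x(1)] \<sigma>cls[OF x'(1)] x x' req_sym req_trans by metis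
    have "cls x = cls x'"
    proof -
      have "tdelta L \<pi> x y = 0 \<longleftrightarrow> tdelta L \<pi> x' y = 0" if y: "y \<in> {0..<L 0}" for y
        using tdreq[OF x(1) y] tdreq[OF x'(1) y] r req_sym req_trans by metis
      then show ?thesis unfolding cls_def circ_pts_def by auto
    qed
    then show "c = c'" using x x' by simp
  qed
  have img: "h ` Sinf L \<pi> = circ_pts Linf"
  proof
    show "h ` Sinf L \<pi> \<subseteq> circ_pts Linf" unfolding h_def circ_pts_def using rmod_range[OF Linf] by blast
    show "circ_pts Linf \<subseteq> h ` Sinf L \<pi>"
    proof
      fix p assume p: "p \<in> circ_pts Linf"
      then have p': "0 \<le> p" "p < Linf" unfolding circ_pts_def by auto
      obtain x where x: "0 \<le> x" "x \<le> L 0" "Gl x = p"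
        using IVT'[of Gl 0 p "L 0", OF _ _ _ Glc] Gl0 GlL p' L0 by auto
      have xl: "x \<in> {0..<L 0}" using x p' GlL by (cases "x = L 0") auto
      have "h (cls x) = rmod Linf (Gl x)" unfolding h_def using rmod_req_eq[OF Linf req_sym[OF \<sigma>cls[OF xl]]] .
      also have "\<dots> = p" using rmod_eq_iff[OF Linf _ req_refl] p x(3) unfolding circ_pts_def by simp
      finally show "p \<in> h ` Sinf L \<pi>" using xl Sd by (metis imageI)
    qed
  qed
  have bij: "bij_betw h (Sinf L \<pi>) (circ_pts Linf)" using bij_betw_imageI[OF inj img] .
  define V where "V c = lim (\<lambda>i. \<alpha>s i (picomp \<pi> i (\<sigma> c)))" for c
  have Vt: "(\<lambda>i. \<alpha>s i (picomp \<pi> i (\<sigma> c))) \<longlonglongrightarrow> V c" if "c \<in> Sinf L \<pi>" for c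
    using conv[OF \<sigma>S[OF that]] unfolding V_def z_def convergent_LIMSEQ_iff .
  have Vd: "dist (V c) (V c') \<le> circ_dist Linf (h c) (h c') + R" if c: "c \<in> Sinf L \<pi>" and c': "c' \<in> Sinf L \<pi>" for c c'
  proof -
    have t1: "(\<lambda>i. dist (\<alpha>s i (picomp \<pi> i (\<sigma> c))) (\<alpha>s i (picomp \<pi> i (\<sigma> c')))) \<longlonglongrightarrow> dist (V c) (V c')"
      by (intro tendsto_dist Vt c c')
    have "(\<lambda>i. circ_dist (L i) (picomp \<pi> i (\<sigma> c)) (picomp \<pi> i (\<sigma> c'))) \<longlonglongrightarrow> tdelta L \<pi> (\<sigma> c) (\<sigma> c')"
    proof -
      have e: "circ_dist (L i) (picomp \<pi> i (\<sigma> c)) (picomp \<pi> i (\<sigma> c')) = circ_dist (L i) (G i (\<sigma> c)) (G i (\<sigma> c'))" for i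
        using zf[OF \<sigma>S[OF c], of i] zf[OF \<sigma>S[OF c'], of i] cd_rmod2[OF Lpos[rule_format, of i]] cd_affine[OF ssv[of i]]
        unfolding z_def by simp
      show ?thesis unfolding e td[OF \<sigma>S[OF c] \<sigma>S[OF c']]
        using cd_tendsto[OF Lt Linf Lpos Gt Gt] \<sigma>S[OF c] \<sigma>S[OF c'] by auto
    qed
    then have t2: "(\<lambda>i. circ_dist (L i) (picomp \<pi> i (\<sigma> c)) (picomp \<pi> i (\<sigma> c')) + R) \<longlonglongrightarrow> circ_dist Linf (h c) (h c') + R"
      using hd[OF c c'] by (intro tendsto_add) auto
    have "dist (\<alpha>s i (picomp \<pi> i (\<sigma> c))) (\<alpha>s i (picomp \<pi> i (\<sigma> c'))) \<le> circ_dist (L i) (picomp \<pi> i (\<sigma> c)) (picomp \<pi> i (\<sigma> c')) + R" for i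
      using rc[of i] picomp_range[OF ts \<sigma>S[OF c], of i] picomp_range[OF ts \<sigma>S[OF c'], of i]
      unfolding rcircle_def circ_pts_def by blast
    then show ?thesis using LIMSEQ_le[OF t1 t2] by blast
  qed
  have rcirc: "rcircle R Linf (V \<circ> inv_into (Sinf L \<pi>) h)"
    unfolding rcircle_def
  proof (intro conjI ballI)
    show "0 < Linf" by (rule Linf)
    fix p q assume p: "p \<in> circ_pts Linf" and q: "q \<in> circ_pts Linf"
    have pc: "inv_into (Sinf L \<pi>) h p \<in> Sinf L \<pi>" "h (inv_into (Sinf L \<pi>) h p) = p"
      using p img inv_into_into f_inv_into_f by metis+
    have qc: "inv_into (Sinf L \<pi>) h q \<in> Sinf L \<pi>" "h (inv_into (Sinf L \<pi>) h q) = q"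
      using q img inv_into_into f_inv_into_f by metis+
    show "dist ((V \<circ> inv_into (Sinf L \<pi>) h) p) ((V \<circ> inv_into (Sinf L \<pi>) h) q) \<le> circ_dist Linf p q + R"
      using Vd[OF pc(1) qc(1)] pc(2) qc(2) by simp
  qed
  show ?thesis
    using part1 bij hd rcirc unfolding V_def by blast
qed

end
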